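(* Consider the fluid model $\frac{d}{dt}x(t)=-u(t)+\alpha$ on $x(t)\ge0$ with inputs $u(t)\ge0$, where $\alpha>0$, and let $J^*(x)=\inf_u\int_0^\infty c^F(x(t),u(t))\,dt$ with $x(0)=x$. (i) For the polynomial cost $c^F(x,u)=x+\nu([u-\alpha]_+)^{\varrho}$ with $\nu>0$, $\varrho>1$, the fluid value function and optimal feedback policy are \[ J^*(x)=\nu\,x^{\frac{2\varrho-1}{\varrho}}\frac{\varrho^2}{2\varrho-1}\Bigl(\frac{1}{\nu(\varrho-1)}\Bigr)^{\frac{\varrho-1}{\varrho}},\qquad \phi^{F*}(x)=\Bigl(\frac{x}{\nu(\varrho-1)}\Bigr)^{1/\varrho}+\alpha. \] (ii) For the exponential cost $c^F(x,u)=x+\nu[e^{\kappa u}-e^{\kappa\alpha}]_+$ with $\nu>0$, $\kappa>0$, set $\tilde\beta=\nu e^{\kappa\alpha}$ and $\tilde x=x-\tilde\beta$. There are constants $C_-,C_+$ such that, whenever $x\ge\tilde\beta(e^2+1)$, \[ C_-+\frac{\kappa}{2}\,\frac{\tilde x^2}{\log(\tilde x)-\log(\nu)-(\kappa\alpha+1)}\le J^*(x)\le C_++\frac{\kappa}{2}\tilde x^2. \]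
   Context: $[z]_+=\max(0,z)$. The fluid model is the deterministic approximation of the speed scaling queue $X(t+1)=X(t)-U(t)+A(t+1)$ with arrival mean $\alpha$. *)

theory Defs
  imports "HOL-Analysis.Analysis"
begin

text \<open>Fluid model dx/dt = -u(t) + alpha, x(0) = x0. The state is the
 (absolutely continuous) solution x(t) = x0 + int_0^t (alpha - u(s)) ds.\<close>
definition fluid_state :: "real \<Rightarrow> real \<Rightarrow> (real \<Rightarrow> real) \<Rightarrow> real \<Rightarrow> real" where
  "fluid_state \<alpha> x0 u t = x0 + (LINT s:{0..t}|lborel. \<alpha> - u s)"

definition fluid_admissible :: "real \<Rightarrow> real \<Rightarrow> (real \<Rightarrow> real) \<Rightarrow> bool" where
  "fluid_admissible \<alpha> x0 u \<longleftrightarrow>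
     set_borel_measurable lborel {0..} u \<and>
     (\<forall>T\<ge>0. set_integrable lborel {0..T} u) \<and>
     (\<forall>t\<ge>0. u t \<ge> 0) \<and>
     (\<forall>t\<ge>0. fluid_state \<alpha> x0 u t \<ge> 0)"

definition fluid_cost :: "(real \<Rightarrow> real \<Rightarrow> real) \<Rightarrow> real \<Rightarrow> real \<Rightarrow> (real \<Rightarrow> real) \<Rightarrow> ennreal" where
  "fluid_cost c \<alpha> x0 u = (\<integral>\<^sup>+ t \<in> {0..}. ennreal (c (fluid_state \<alpha> x0 u t) (u t)) \<partial>lborel)"

definition fluid_value :: "(real \<Rightarrow> real \<Rightarrow> real) \<Rightarrow> real \<Rightarrow> real \<Rightarrow> ennreal" where
  "fluid_value c \<alpha> x0 = (INF u \<in> {u. fluid_admissible \<alpha> x0 u}. fluid_cost c \<alpha> x0 u)"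

definition poly_cost :: "real \<Rightarrow> real \<Rightarrow> real \<Rightarrow> real \<Rightarrow> real \<Rightarrow> real" where
  "poly_cost \<nu> \<rho> \<alpha> x u = x + \<nu> * (max 0 (u - \<alpha>)) powr \<rho>"

definition exp_cost :: "real \<Rightarrow> real \<Rightarrow> real \<Rightarrow> real \<Rightarrow> real \<Rightarrow> real" where
  "exp_cost \<nu> \<kappa> \<alpha> x u = x + \<nu> * max 0 (exp (\<kappa> * u) - exp (\<kappa> * \<alpha>))"

end

theory Submission
  imports Defs
begin


lemma adm_int:
  assumes "fluid_admissible \<alpha> x0 u" "0 \<le> T"
  shows "set_integrable lborel {0..T} (\<lambda>s. \<alpha> - u s)"
proof -
  have "set_integrable lborel {0..T} (\<lambda>s. \<alpha>)"
    by (rule borel_integrable_atLeastAtMost') (rule continuous_on_const)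
  moreover have "set_integrable lborel {0..T} u" using assms unfolding fluid_admissible_def by auto
  ultimately show ?thesis by (rule set_integral_diff(1))
qed

lemma state_diff:
  assumes "fluid_admissible \<alpha> x0 u" "0 \<le> a" "a \<le> b"
  shows "fluid_state \<alpha> x0 u b - fluid_state \<alpha> x0 u a = (LINT s:{a<..b}|lborel. \<alpha> - u s)"
proof -
  have I: "set_integrable lborel {0..b} (\<lambda>s. \<alpha> - u s)" using adm_int assms by auto
  have e: "{0..b} = {0..a} \<union> {a<..b}" using assms by auto
  have "(LINT s:{0..b}|lborel. \<alpha> - u s) = (LINT s:{0..a}|lborel. \<alpha> - u s) + (LINT s:{a<..b}|lborel. \<alpha> - u s)"
    unfolding e
    by (rule set_integral_Un) (use assms in \<open>auto intro!: set_integrable_subset[OF I]\<close>)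
  then show ?thesis unfolding fluid_state_def by simp
qed

lemma state_0:
  shows "fluid_state \<alpha> x0 u 0 = x0"
proof -
  have "(LINT s:{0..0}|lborel. \<alpha> - u s) = 0"
    unfolding set_lebesgue_integral_def
    by (rule integral_eq_zero_AE) (rule eventually_mono[OF AE_lborel_singleton[of 0]], simp add: indicator_def)
  then show ?thesis unfolding fluid_state_def by simp
qed

lemma state_cont_T:
  assumes "fluid_admissible \<alpha> x0 u" "0 \<le> T"
  shows "continuous_on {0..T} (fluid_state \<alpha> x0 u)"
proof -
  have I: "set_integrable lborel {0..T} (\<lambda>s. \<alpha> - u s)" using adm_int assms by auto
  have "(\<lambda>s. \<alpha> - u s) integrable_on {0..T}" using set_borel_integral_eq_integral(1)[OF I] .
  then have c: "continuous_on {0..T} (\<lambda>t. integral {0..t} (\<lambda>s. \<alpha> - u s))"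
    by (rule indefinite_integral_continuous_1)
  have "continuous_on {0..T} (\<lambda>t. x0 + integral {0..t} (\<lambda>s. \<alpha> - u s))"
    by (intro continuous_intros c)
  moreover have "\<And>t. t \<in> {0..T} \<Longrightarrow> fluid_state \<alpha> x0 u t = x0 + integral {0..t} (\<lambda>s. \<alpha> - u s)"
  proof -
    fix t assume t: "t \<in> {0..T}"
    have "set_integrable lborel {0..t} (\<lambda>s. \<alpha> - u s)" using adm_int assms t by auto
    then show "fluid_state \<alpha> x0 u t = x0 + integral {0..t} (\<lambda>s. \<alpha> - u s)"
      unfolding fluid_state_def using set_borel_integral_eq_integral(2) by metis
  qed
  ultimately show ?thesis using continuous_on_cong by (smt (verit))
qed

lemma state_cont_ext:
  assumes "fluid_admissible \<alpha> x0 u"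
  shows "continuous_on UNIV (\<lambda>t. fluid_state \<alpha> x0 u (max 0 t))"
proof -
  have "continuous_on (\<Union>T\<in>{0::real<..}. {..<T}) (\<lambda>t. fluid_state \<alpha> x0 u (max 0 t))"
  proof (rule continuous_on_open_UN)
    fix T :: real assume T: "T \<in> {0<..}"
    have "continuous_on {..<T} (max 0)" by (intro continuous_intros)
    moreover have "continuous_on (max 0 ` {..<T}) (fluid_state \<alpha> x0 u)"
      by (rule continuous_on_subset[OF state_cont_T[OF assms, of T]]) (use T in auto)
    ultimately show "continuous_on {..<T} (\<lambda>t. fluid_state \<alpha> x0 u (max 0 t))"
      using continuous_on_compose[of "{..<T}" "max 0" "fluid_state \<alpha> x0 u"] by (simp add: o_def)
  qed auto
  moreover have "(\<Union>T\<in>{0::real<..}. {..<T}) = UNIV"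
  proof -
    { fix x :: real have "x \<in> {..<max 1 (x+1)}" "max 1 (x+1) \<in> {0<..}" by auto
      then have "x \<in> (\<Union>T\<in>{0::real<..}. {..<T})" by blast }
    then show ?thesis by blast
  qed
  ultimately show ?thesis by simp
qed

lemma state_cont:
  assumes "fluid_admissible \<alpha> x0 u"
  shows "continuous_on {0..} (fluid_state \<alpha> x0 u)"
proof -
  have "continuous_on {0..} (\<lambda>t. fluid_state \<alpha> x0 u (max 0 t))"
    using state_cont_ext[OF assms] continuous_on_subset by blast
  then show ?thesis by (rule continuous_on_cong[THEN iffD1, rotated 2]) auto
qed

lemma state_meas:
  assumes "fluid_admissible \<alpha> x0 u"
  shows "(\<lambda>t. fluid_state \<alpha> x0 u (max 0 t)) \<in> borel_measurable borel"
  by (rule borel_measurable_continuous_onI[OF state_cont_ext[OF assms]])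

lemma u_meas:
  assumes "fluid_admissible \<alpha> x0 u"
  shows "(\<lambda>t. indicator {0..} t * u t) \<in> borel_measurable borel"
  using assms unfolding fluid_admissible_def set_borel_measurable_def by simp



lemma ennreal_set_integral_le:
  fixes g :: "real \<Rightarrow> real"
  assumes "set_integrable lborel A g"
  shows "ennreal (LINT t:A|lborel. g t) \<le> (\<integral>\<^sup>+t. ennreal (g t) * indicator A t \<partial>lborel)"
proof -
  let ?f = "\<lambda>t. indicator A t *\<^sub>R g t"
  have int: "integrable lborel ?f" using assms unfolding set_integrable_def .
  have int2: "integrable lborel (\<lambda>t. max 0 (?f t))" by (intro integrable_max int) auto
  have "(LINT t:A|lborel. g t) \<le> integral\<^sup>L lborel (\<lambda>t. max 0 (?f t))"
    unfolding set_lebesgue_integral_def by (intro integral_mono int int2) auto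
  then have "ennreal (LINT t:A|lborel. g t) \<le> ennreal (integral\<^sup>L lborel (\<lambda>t. max 0 (?f t)))"
    by (rule ennreal_leI)
  also have "\<dots> = (\<integral>\<^sup>+t. ennreal (max 0 (?f t)) \<partial>lborel)"
    by (rule nn_integral_eq_integral[symmetric]) (use int2 in auto)
  also have "\<dots> = (\<integral>\<^sup>+t. ennreal (g t) * indicator A t \<partial>lborel)"
    by (intro nn_integral_cong) (auto simp: indicator_def max_def ennreal_neg)
  finally show ?thesis .
qed

lemma mvt_between:
  fixes V V' :: "real \<Rightarrow> real"
  assumes Vc: "continuous_on {0..} V"
    and Vd: "\<And>p. p > 0 \<Longrightarrow> (V has_real_derivative V' p) (at p)"
    and "0 \<le> s" "0 \<le> e" "s \<noteq> e"
  shows "\<exists>\<xi>. min s e < \<xi> \<and> \<xi> < max s e \<and> V s - V e = V' \<xi> * (s - e)"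
proof -
  have gen: "\<exists>\<xi>. a < \<xi> \<and> \<xi> < b \<and> V b - V a = V' \<xi> * (b - a)" if ab: "0 \<le> a" "a < b" for a b
  proof -
    have "continuous_on {a..b} V" by (rule continuous_on_subset[OF Vc]) (use ab in auto)
    moreover have "\<And>x. a < x \<Longrightarrow> x < b \<Longrightarrow> V differentiable (at x)"
      using Vd ab unfolding has_field_derivative_def differentiable_def by (meson le_less_trans)
    ultimately obtain l z where z: "a < z" "z < b" "DERIV V z :> l" "V b - V a = (b - a) * l"
      using MVT[OF ab(2)] by blast
    have "l = V' z" using DERIV_unique[OF z(3) Vd] z ab by auto
    then show ?thesis using z by (auto simp: mult.commute)
  qed
  show ?thesis
  proof (cases "s < e")
    case True
    then obtain \<xi> where "s < \<xi>" "\<xi> < e" "V e - V s = V' \<xi> * (e - s)" using gen assms by blast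
    then show ?thesis using True by (intro exI[of _ \<xi>]) (auto simp: algebra_simps)
  next
    case False
    then have "e < s" using assms by auto
    then obtain \<xi> where "e < \<xi>" "\<xi> < s" "V s - V e = V' \<xi> * (s - e)" using gen assms by blast
    then show ?thesis using \<open>e < s\<close> by (intro exI[of _ \<xi>]) auto
  qed
qed

lemma piece:
  fixes V V' h :: "real \<Rightarrow> real"
  assumes adm: "fluid_admissible \<alpha> x0 u"
    and Vc: "continuous_on {0..} V"
    and Vd: "\<And>p. p > 0 \<Longrightarrow> (V has_real_derivative V' p) (at p)"
    and hjb: "\<And>p w. p > 0 \<Longrightarrow> w \<ge> 0 \<Longrightarrow> V' p * (w - \<alpha>) \<le> p + h w"
    and ab: "0 \<le> a" "a \<le> b" and dl: "0 \<le> \<delta>"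
    and close: "\<And>t. t \<in> {a..b} \<Longrightarrow> \<bar>fluid_state \<alpha> x0 u t - fluid_state \<alpha> x0 u a\<bar> \<le> \<delta>"
  shows "ennreal (V (fluid_state \<alpha> x0 u a) - V (fluid_state \<alpha> x0 u b) - 2*\<delta>*(b-a))
     \<le> (\<integral>\<^sup>+t. ennreal (fluid_state \<alpha> x0 u t + h (u t)) * indicator {a<..b} t \<partial>lborel)"
proof -
  define x where "x = fluid_state \<alpha> x0 u"
  define s where "s = x a"
  define e where "e = x b"
  have xnn: "\<And>t. t \<ge> 0 \<Longrightarrow> x t \<ge> 0" and unn: "\<And>t. t \<ge> 0 \<Longrightarrow> u t \<ge> 0"
    using adm unfolding fluid_admissible_def x_def by auto
  have s0: "s \<ge> 0" "e \<ge> 0" using xnn ab unfolding s_def e_def by auto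
  show ?thesis
  proof (cases "s = e")
    case True
    have "V (x a) - V (x b) - 2*\<delta>*(b-a) \<le> 0" using True ab dl unfolding s_def e_def by auto
    then show ?thesis unfolding x_def by (simp add: ennreal_neg)
  next
    case False
    obtain \<xi> where xi: "min s e < \<xi>" "\<xi> < max s e" "V s - V e = V' \<xi> * (s - e)"
      using mvt_between[OF Vc Vd s0 False] by blast
    have Iab: "set_integrable lborel {a<..b} (\<lambda>t. \<alpha> - u t)"
      by (rule set_integrable_subset[OF adm_int[OF adm, of b]]) (use ab in auto)
    have Ic: "set_integrable lborel {a<..b} (\<lambda>t. 2*\<delta>)"
      by (rule set_integrable_subset[OF borel_integrable_atLeastAtMost'[OF continuous_on_const, of a b]]) auto
    have sd: "e - s = (LINT t:{a<..b}|lborel. \<alpha> - u t)"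
      using state_diff[OF adm ab] unfolding s_def e_def x_def .
    define g where "g = (\<lambda>t. (- V' \<xi>) * (\<alpha> - u t) - 2*\<delta>)"
    have Im: "set_integrable lborel {a<..b} (\<lambda>t. (- V' \<xi>) * (\<alpha> - u t))"
      by (rule set_integrable_mult_right) (rule Iab)
    have Ig: "set_integrable lborel {a<..b} g"
      unfolding g_def by (rule set_integral_diff(1)[OF Im Ic])
    have "(LINT t:{a<..b}|lborel. g t) = (- V' \<xi>) * (LINT t:{a<..b}|lborel. \<alpha> - u t) - (LINT t:{a<..b}|lborel. 2*\<delta>)"
      unfolding g_def set_integral_diff(2)[OF Im Ic] set_integral_mult_right by simp
    also have "(LINT t:{a<..b}|lborel. 2*\<delta>) = (b - a) * (2*\<delta>)"
      using ab by (subst set_integral_const) auto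
    finally have gv: "(LINT t:{a<..b}|lborel. g t) = V s - V e - 2*\<delta>*(b-a)"
      using sd xi(3) by (simp add: algebra_simps)
    have gle: "g t \<le> x t + h (u t)" if t: "t \<in> {a<..b}" for t
    proof -
      have t0: "t \<ge> 0" using t ab by auto
      have c1: "\<bar>x t - s\<bar> \<le> \<delta>" using close[of t] t unfolding x_def s_def by auto
      have c2: "\<bar>e - s\<bar> \<le> \<delta>" using close[of b] ab unfolding x_def s_def e_def by auto
      have "\<xi> \<le> x t + 2*\<delta>" using xi(2) c1 c2 by (auto simp: max_def abs_if split: if_splits)
      moreover have "\<xi> > 0" using xi(1) s0 by auto
      moreover have "V' \<xi> * (u t - \<alpha>) \<le> \<xi> + h (u t)" using hjb[OF \<open>\<xi> > 0\<close> unn[OF t0]] .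
      ultimately show ?thesis unfolding g_def by (simp add: algebra_simps)
    qed
    have "ennreal (V s - V e - 2*\<delta>*(b-a)) \<le> (\<integral>\<^sup>+t. ennreal (g t) * indicator {a<..b} t \<partial>lborel)"
      using ennreal_set_integral_le[OF Ig] gv by simp
    also have "\<dots> \<le> (\<integral>\<^sup>+t. ennreal (x t + h (u t)) * indicator {a<..b} t \<partial>lborel)"
      by (intro nn_integral_mono) (auto simp: indicator_def intro!: ennreal_leI gle)
    finally show ?thesis unfolding s_def e_def x_def .
  qed
qed



lemma sum_ind:
  fixes c t :: real assumes "c > 0"
  shows "(\<Sum>k<n. indicator {real k * c<..real (Suc k) * c} t :: ennreal) = indicator {0<..real n * c} t"
proof (induction n)
  case 0 then show ?case by simp
next
  case (Suc n)
  have "0 \<le> c * real n" using assms by simp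
  then show ?case using Suc assms by (auto simp: indicator_def algebra_simps) (smt (verit) assms mult_nonneg_nonneg of_nat_0_le_iff)+
qed

lemma ennreal_add_le: "ennreal (a + b) \<le> ennreal a + ennreal b"
proof (cases "a \<ge> 0 \<and> b \<ge> 0")
  case True then show ?thesis by (simp add: ennreal_plus)
next
  case False
  then show ?thesis
  proof (cases "a < 0")
    case True
    then have "ennreal (a + b) \<le> ennreal b" by (intro ennreal_leI) auto
    moreover have "ennreal a = 0" using True by (simp add: ennreal_neg)
    ultimately show ?thesis by simp
  next
    case f2: False
    then have "b < 0" using False by auto
    then have "ennreal (a + b) \<le> ennreal a" by (intro ennreal_leI) auto
    moreover have "ennreal b = 0" using \<open>b < 0\<close> by (simp add: ennreal_neg)
    ultimately show ?thesis by simp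
  qed
qed

lemma ennreal_sum_le:
  assumes "finite I"
  shows "ennreal (\<Sum>i\<in>I. f i) \<le> (\<Sum>i\<in>I. ennreal (f i))"
  using assms
proof (induction I rule: finite_induct)
  case empty then show ?case by simp
next
  case (insert i I)
  have "ennreal (\<Sum>i\<in>insert i I. f i) = ennreal (f i + (\<Sum>i\<in>I. f i))" using insert by simp
  also have "\<dots> \<le> ennreal (f i) + ennreal (\<Sum>i\<in>I. f i)" by (rule ennreal_add_le)
  also have "\<dots> \<le> ennreal (f i) + (\<Sum>i\<in>I. ennreal (f i))" using insert by (intro add_left_mono) auto
  finally show ?case using insert by simp
qed

lemma verif_T:
  fixes V V' h :: "real \<Rightarrow> real"
  assumes adm: "fluid_admissible \<alpha> x0 u"
    and Vc: "continuous_on {0..} V"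
    and Vd: "\<And>p. p > 0 \<Longrightarrow> (V has_real_derivative V' p) (at p)"
    and hjb: "\<And>p w. p > 0 \<Longrightarrow> w \<ge> 0 \<Longrightarrow> V' p * (w - \<alpha>) \<le> p + h w"
    and hm: "h \<in> borel_measurable borel"
    and T: "0 \<le> T" and dl: "0 < \<delta>"
  shows "ennreal (V x0 - V (fluid_state \<alpha> x0 u T) - 2*\<delta>*T)
     \<le> (\<integral>\<^sup>+t\<in>{0..}. ennreal (fluid_state \<alpha> x0 u t + h (u t)) \<partial>lborel)"
proof (cases "T = 0")
  case True then show ?thesis by (simp add: state_0)
next
  case False
  then have Tp: "T > 0" using T by auto
  define x where "x = fluid_state \<alpha> x0 u"
  define F where "F = (\<lambda>t. ennreal (x t + h (u t)))"
  define G where "G = (\<lambda>t. ennreal (x (max 0 t) + h (indicator {0..} t * u t)))"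
  have FG: "F t = G t" if "t \<ge> 0" for t using that unfolding F_def G_def by simp
  have m1: "(\<lambda>t. x (max 0 t)) \<in> borel_measurable borel" using state_meas[OF adm] unfolding x_def .
  have m2: "(\<lambda>t. h (indicator {0..} t * u t)) \<in> borel_measurable borel"
    using measurable_compose[OF u_meas[OF adm] hm] by (simp add: o_def)
  have m3: "(\<lambda>t. x (max 0 t) + h (indicator {0..} t * u t)) \<in> borel_measurable borel"
    by (rule borel_measurable_add[OF m1 m2])
  note m3[measurable]
  have Gm: "(\<lambda>t. G t * indicator A t) \<in> borel_measurable lborel" if "A \<in> sets borel" for A
    unfolding G_def using that by measurable
  have uc: "uniformly_continuous_on {0..T} x"
    unfolding x_def by (rule compact_uniformly_continuous[OF state_cont_T[OF adm T] compact_Icc])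
  then obtain d where d: "d > 0" "\<And>s t. s \<in> {0..T} \<Longrightarrow> t \<in> {0..T} \<Longrightarrow> dist t s < d \<Longrightarrow> dist (x t) (x s) < \<delta>"
    unfolding uniformly_continuous_on_def using dl by metis
  obtain n :: nat where n: "T / d < real n" using reals_Archimedean2 by blast
  define N where "N = Suc n"
  define c where "c = T / real N"
  have cp: "c > 0" unfolding c_def N_def using Tp by simp
  have Nc: "real N * c = T" unfolding c_def N_def by simp
  have "T / d < real N" using n unfolding N_def by simp
  then have "T < real N * d" using d(1) by (simp add: field_simps)
  then have cd: "c < d" unfolding c_def N_def using d(1) by (simp add: field_simps)
  have P: "ennreal (V (x (real k * c)) - V (x (real (Suc k) * c)) - 2*\<delta>*c)
      \<le> (\<integral>\<^sup>+t. G t * indicator {real k * c<..real (Suc k) * c} t \<partial>lborel)" if k: "k < N" for k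
  proof -
    have kk: "real (Suc k) * c \<le> T" using k Nc cp
      by (metis Suc_leI mult_le_cancel_right_pos of_nat_le_iff)
    have "ennreal (V (x (real k * c)) - V (x (real (Suc k) * c)) - 2*\<delta>*(real (Suc k) * c - real k * c))
      \<le> (\<integral>\<^sup>+t. F t * indicator {real k * c<..real (Suc k) * c} t \<partial>lborel)"
      unfolding F_def x_def
    proof (rule piece[OF adm Vc Vd hjb])
      show "0 \<le> real k * c" using cp by simp
      show "real k * c \<le> real (Suc k) * c" using cp by (simp add: field_simps)
      show "0 \<le> \<delta>" using dl by simp
      fix t assume t: "t \<in> {real k * c..real (Suc k) * c}"
      have "dist t (real k * c) < d" using t cd by (auto simp: dist_real_def field_simps)
      moreover have "0 \<le> real k * c" using cp by simp
      moreover have "real k * c \<le> real (Suc k) * c" using cp by (simp add: field_simps)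
      moreover have tb: "real k * c \<le> t" "t \<le> real (Suc k) * c" using t by auto
      ultimately have "t \<in> {0..T}" "real k * c \<in> {0..T}" "dist t (real k * c) < d" using kk by auto
      then have "dist (x t) (x (real k * c)) < \<delta>" using d(2) by blast
      then show "\<bar>fluid_state \<alpha> x0 u t - fluid_state \<alpha> x0 u (real k * c)\<bar> \<le> \<delta>"
        unfolding x_def dist_real_def by simp
    qed auto
    also have "(\<integral>\<^sup>+t. F t * indicator {real k * c<..real (Suc k) * c} t \<partial>lborel)
       = (\<integral>\<^sup>+t. G t * indicator {real k * c<..real (Suc k) * c} t \<partial>lborel)"
      using cp by (intro nn_integral_cong) (auto simp: indicator_def intro!: FG; smt (verit) mult_nonneg_nonneg of_nat_0_le_iff)
    finally show ?thesis by (simp add: algebra_simps)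
  qed
  have sumeq: "(\<Sum>k<N. V (x (real k * c)) - V (x (real (Suc k) * c)) - 2*\<delta>*c) = V x0 - V (x T) - 2*\<delta>*T"
  proof -
    have "(\<Sum>k<N. V (x (real k * c)) - V (x (real (Suc k) * c)) - 2*\<delta>*c)
        = (\<Sum>k<N. V (x (real k * c)) - V (x (real (Suc k) * c))) - real N * (2*\<delta>*c)"
      by (simp add: sum_subtractf)
    also have "(\<Sum>k<N. V (x (real k * c)) - V (x (real (Suc k) * c))) = V (x (real 0 * c)) - V (x (real N * c))"
      by (rule sum_lessThan_telescope'[where f = "\<lambda>k. V (x (real k * c))"])
    finally have "(\<Sum>k<N. V (x (real k * c)) - V (x (real (Suc k) * c)) - 2*\<delta>*c)
      = V (x (real 0 * c)) - V (x (real N * c)) - real N * (2*\<delta>*c)" .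
    moreover have "real N * (2*\<delta>*c) = 2*\<delta>*T" using Nc by (metis mult.commute mult.left_commute)
    ultimately show ?thesis using Nc state_0[of \<alpha> x0 u] unfolding x_def by simp
  qed
  have "ennreal (V x0 - V (x T) - 2*\<delta>*T) \<le> (\<Sum>k<N. ennreal (V (x (real k * c)) - V (x (real (Suc k) * c)) - 2*\<delta>*c))"
    unfolding sumeq[symmetric] by (rule ennreal_sum_le) simp
  also have "\<dots> \<le> (\<Sum>k<N. (\<integral>\<^sup>+t. G t * indicator {real k * c<..real (Suc k) * c} t \<partial>lborel))"
    by (intro sum_mono P) simp
  also have "\<dots> = (\<integral>\<^sup>+t. (\<Sum>k<N. G t * indicator {real k * c<..real (Suc k) * c} t) \<partial>lborel)"
    by (rule nn_integral_sum[symmetric]) (intro Gm; simp)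
  also have "\<dots> = (\<integral>\<^sup>+t. G t * indicator {0<..T} t \<partial>lborel)"
    by (intro nn_integral_cong) (simp only: sum_distrib_left[symmetric] sum_ind[OF cp] Nc)
  also have "\<dots> \<le> (\<integral>\<^sup>+t. G t * indicator {0..} t \<partial>lborel)"
    by (intro nn_integral_mono) (auto simp: indicator_def)
  also have "\<dots> = (\<integral>\<^sup>+t. F t * indicator {0..} t \<partial>lborel)"
    by (intro nn_integral_cong) (auto simp: indicator_def FG)
  finally show ?thesis unfolding F_def x_def .
qed



lemma verif:
  fixes V V' h :: "real \<Rightarrow> real"
  assumes adm: "fluid_admissible \<alpha> x0 u"
    and Vc: "continuous_on {0..} V"
    and Vd: "\<And>p. p > 0 \<Longrightarrow> (V has_real_derivative V' p) (at p)"
    and hjb: "\<And>p w. p > 0 \<Longrightarrow> w \<ge> 0 \<Longrightarrow> V' p * (w - \<alpha>) \<le> p + h w"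
    and hm: "h \<in> borel_measurable borel"
    and hnn: "\<And>w. w \<ge> 0 \<Longrightarrow> h w \<ge> 0"
  shows "ennreal (V x0 - V 0) \<le> (\<integral>\<^sup>+t\<in>{0..}. ennreal (fluid_state \<alpha> x0 u t + h (u t)) \<partial>lborel)"
proof -
  define x where "x = fluid_state \<alpha> x0 u"
  define C where "C = (\<integral>\<^sup>+t\<in>{0..}. ennreal (x t + h (u t)) \<partial>lborel)"
  have xnn: "\<And>t. t \<ge> 0 \<Longrightarrow> x t \<ge> 0" and unn: "\<And>t. t \<ge> 0 \<Longrightarrow> u t \<ge> 0"
    using adm unfolding fluid_admissible_def x_def by auto
  show ?thesis
  proof (cases C)
    case top then show ?thesis unfolding C_def x_def by simp
  next
    case (real c)
    have "V x0 - V 0 \<le> c"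
    proof (rule field_le_epsilon)
      fix \<epsilon> :: real assume ep: "0 < \<epsilon>"
      obtain \<eta> where eta: "\<eta> > 0" "\<And>p. p \<in> {0..} \<Longrightarrow> dist p 0 < \<eta> \<Longrightarrow> dist (V p) (V 0) < \<epsilon>/2"
        using Vc ep unfolding continuous_on_iff by (metis atLeast_iff half_gt_zero order_refl)
      have "\<exists>T\<ge>0. x T < \<eta>"
      proof (rule ccontr)
        assume "\<not> (\<exists>T\<ge>0. x T < \<eta>)"
        then have ge: "\<And>T. T \<ge> 0 \<Longrightarrow> x T \<ge> \<eta>" by force
        obtain n :: nat where n: "c / \<eta> < real n" using reals_Archimedean2 by blast
        have "ennreal (\<eta> * real n) = (\<integral>\<^sup>+t. ennreal \<eta> * indicator {0..real n} t \<partial>lborel)"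
          using eta by (simp add: nn_integral_cmult_indicator ennreal_mult)
        also have "\<dots> \<le> C" unfolding C_def
          by (intro nn_integral_mono) (auto simp: indicator_def intro!: ennreal_leI ge add_increasing2 hnn unn)
        finally have "\<eta> * real n \<le> c" using real by simp
        moreover have "c < \<eta> * real n" using n eta by (simp add: field_simps)
        ultimately show False by simp
      qed
      then obtain T where T: "T \<ge> 0" "x T < \<eta>" by blast
      have VT: "V (x T) < V 0 + \<epsilon>/2" proof -
        have "\<bar>V (x T) - V 0\<bar> < \<epsilon>/2" using eta(2)[of "x T"] xnn[OF T(1)] T(2) by (simp add: dist_real_def)
        then show ?thesis by linarith
      qed
      define \<delta> where "\<delta> = \<epsilon> / (4 * (T + 1))"
      have dp: "\<delta> > 0" unfolding \<delta>_def using ep T by simp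
      have dT: "2*\<delta>*T \<le> \<epsilon>/2" unfolding \<delta>_def using ep T by (simp add: field_simps)
      have "ennreal (V x0 - V (x T) - 2*\<delta>*T) \<le> C"
        unfolding C_def x_def by (rule verif_T[OF adm Vc Vd hjb hm T(1) dp])
      then have "V x0 - V (x T) - 2*\<delta>*T \<le> c" using real by simp
      then show "V x0 - V 0 \<le> c + \<epsilon>" using VT dT by linarith
    qed
    then show ?thesis using real unfolding C_def x_def by simp
  qed
qed



lemma explicit_adm:
  fixes X U :: "real \<Rightarrow> real"
  assumes Xc: "continuous_on UNIV X" and Uc: "continuous_on UNIV U"
    and S: "finite S"
    and Xd: "\<And>t. t > 0 \<Longrightarrow> t \<notin> S \<Longrightarrow> (X has_real_derivative (\<alpha> - U t)) (at t)"
    and X0: "X 0 = x0" and Unn: "\<And>t. t \<ge> 0 \<Longrightarrow> U t \<ge> 0" and Xnn: "\<And>t. t \<ge> 0 \<Longrightarrow> X t \<ge> 0"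
  shows "fluid_admissible \<alpha> x0 U" "\<And>t. t \<ge> 0 \<Longrightarrow> fluid_state \<alpha> x0 U t = X t"
proof -
  have st: "fluid_state \<alpha> x0 U t = X t" if t: "t \<ge> 0" for t
  proof -
    have cU: "continuous_on {0..t} (\<lambda>s. \<alpha> - U s)"
      by (intro continuous_intros continuous_on_subset[OF Uc]) auto
    have I: "set_integrable lborel {0..t} (\<lambda>s. \<alpha> - U s)" by (rule borel_integrable_atLeastAtMost'[OF cU])
    have "((\<lambda>s. \<alpha> - U s) has_integral (X t - X 0)) {0..t}"
    proof (rule fundamental_theorem_of_calculus_interior_strong[OF S t])
      fix s assume "s \<in> {0<..<t} - S"
      then show "(X has_vector_derivative (\<alpha> - U s)) (at s)"
        using Xd by (auto simp flip: has_real_derivative_iff_has_vector_derivative)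
    next
      show "continuous_on {0..t} X" by (rule continuous_on_subset[OF Xc]) auto
    qed
    then have "integral {0..t} (\<lambda>s. \<alpha> - U s) = X t - X 0" by (rule integral_unique)
    then show ?thesis unfolding fluid_state_def set_borel_integral_eq_integral(2)[OF I] using X0 by simp
  qed
  show "\<And>t. t \<ge> 0 \<Longrightarrow> fluid_state \<alpha> x0 U t = X t" by (rule st)
  have Um: "U \<in> borel_measurable borel" by (rule borel_measurable_continuous_onI[OF Uc])
  note Um[measurable]
  show "fluid_admissible \<alpha> x0 U"
    unfolding fluid_admissible_def set_borel_measurable_def
  proof (intro conjI allI impI)
    show "(\<lambda>x. indicat_real {0..} x *\<^sub>R U x) \<in> borel_measurable lborel" by measurable
    fix T :: real assume "0 \<le> T"
    show "set_integrable lborel {0..T} U"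
      by (rule borel_integrable_atLeastAtMost'[OF continuous_on_subset[OF Uc]]) auto
  qed (use Unn st Xnn in auto)
qed

lemma powr_deriv_within:
  fixes m p :: real
  assumes m: "m > 1" and p: "p \<ge> 0"
  shows "((\<lambda>y. y powr m) has_real_derivative (m * p powr (m - 1))) (at p within {0..})"
proof (cases "p > 0")
  case True
  show ?thesis using has_real_derivative_powr[OF True, of m] by (rule has_field_derivative_at_within)
next
  case False
  then have p0: "p = 0" using p by auto
  have ev: "eventually (\<lambda>y. y \<ge> 0) (at (0::real) within {0..})"
    by (simp add: eventually_at_filter)
  have "((\<lambda>y. y powr (m - 1)) \<longlongrightarrow> 0 powr (m - 1)) (at (0::real) within {0..})"
    by (rule tendsto_powr') (use m ev in \<open>auto intro: tendsto_ident_at\<close>)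
  then have lim: "((\<lambda>y. y powr (m - 1)) \<longlongrightarrow> 0) (at (0::real) within {0..})" using m by simp
  have "((\<lambda>y. (y powr m - 0 powr m) / (y - 0)) \<longlongrightarrow> 0) (at (0::real) within {0..})"
  proof (rule Lim_transform_eventually[OF lim])
    show "\<forall>\<^sub>F y in at 0 within {0..}. y powr (m - 1) = (y powr m - 0 powr m) / (y - 0)"
      by (simp add: eventually_at_filter powr_diff)
  qed
  then show ?thesis unfolding p0 has_field_derivative_iff using m by simp
qed

lemma DERIV_piecewise:
  fixes g h :: "real \<Rightarrow> real"
  assumes g: "(g has_real_derivative D) (at c)" and h: "(h has_real_derivative D) (at c)" and gh: "g c = h c"
  shows "((\<lambda>x. if x \<le> c then g x else h x) has_real_derivative D) (at c)"
proof -
  define f where "f = (\<lambda>x. if x \<le> c then g x else h x)"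
  have g': "((\<lambda>y. (g y - g c) / (y - c)) \<longlongrightarrow> D) (at c within {..c})"
    using g unfolding has_field_derivative_iff by (rule tendsto_mono[OF at_le, rotated]) auto
  have h': "((\<lambda>y. (h y - h c) / (y - c)) \<longlongrightarrow> D) (at c within {c..})"
    using h unfolding has_field_derivative_iff by (rule tendsto_mono[OF at_le, rotated]) auto
  have "((\<lambda>y. (f y - f c) / (y - c)) \<longlongrightarrow> D) (at c within {..c})"
    by (rule Lim_transform_eventually[OF g']) (auto simp: eventually_at_filter f_def)
  moreover have "((\<lambda>y. (f y - f c) / (y - c)) \<longlongrightarrow> D) (at c within {c..})"
    by (rule Lim_transform_eventually[OF h']) (auto simp: eventually_at_filter f_def gh)
  ultimately have "((\<lambda>y. (f y - f c) / (y - c)) \<longlongrightarrow> D) (at c within ({..c} \<union> {c..}))"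
    by (simp add: Lim_within_Un)
  moreover have "{..c} \<union> {c..} = UNIV" by auto
  ultimately show ?thesis unfolding has_field_derivative_iff f_def by simp
qed



definition PV :: "real \<Rightarrow> real \<Rightarrow> real \<Rightarrow> real" where
  "PV \<nu> \<rho> p = \<nu> * p powr ((2*\<rho> - 1) / \<rho>) * (\<rho>^2 / (2*\<rho> - 1)) * (1 / (\<nu> * (\<rho> - 1))) powr ((\<rho> - 1) / \<rho>)"

definition PV' :: "real \<Rightarrow> real \<Rightarrow> real \<Rightarrow> real" where
  "PV' \<nu> \<rho> p = \<nu> * \<rho> * (p / (\<nu> * (\<rho> - 1))) powr ((\<rho> - 1) / \<rho>)"

lemma PV_alt:
  assumes "\<rho> > 1"
  shows "PV \<nu> \<rho> = (\<lambda>p. (\<nu> * (\<rho>^2 / (2*\<rho> - 1)) * (1 / (\<nu> * (\<rho> - 1))) powr ((\<rho> - 1) / \<rho>)) * p powr ((2*\<rho> - 1) / \<rho>))"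
  unfolding PV_def by (auto simp: fun_eq_iff)

lemma PV_deriv_eq:
  assumes nu: "\<nu> > 0" and rho: "\<rho> > 1" and p: "p \<ge> 0"
  shows "(\<nu> * (\<rho>^2 / (2*\<rho> - 1)) * (1 / (\<nu> * (\<rho> - 1))) powr ((\<rho> - 1) / \<rho>)) * (((2*\<rho> - 1) / \<rho>) * p powr ((2*\<rho> - 1) / \<rho> - 1)) = PV' \<nu> \<rho> p"
proof -
  define K where "K = \<nu> * (\<rho> - 1)"
  define q where "q = (\<rho> - 1) / \<rho>"
  have K: "K > 0" unfolding K_def using nu rho by simp
  have mq: "(2*\<rho> - 1) / \<rho> - 1 = q" unfolding q_def using rho by (simp add: field_simps)
  have Am: "(\<rho>^2 / (2*\<rho> - 1)) * ((2*\<rho> - 1) / \<rho>) = \<rho>" using rho by (simp add: field_simps power2_eq_square)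
  have pk: "(p / K) powr q = p powr q / K powr q" by (rule powr_divide)
  have ik: "(1 / K) powr q = 1 / K powr q" by (simp add: powr_divide)
  have gen: "\<And>c1 c2 a b. c1 * c2 = \<rho> \<Longrightarrow> \<nu> * c1 * (1/b) * (c2 * a) = \<nu> * \<rho> * (a/b)"
    by (metis (no_types, lifting) mult.assoc mult.commute times_divide_eq_left mult_1)
  show ?thesis unfolding PV'_def K_def[symmetric] q_def[symmetric] mq pk ik
    by (rule gen[OF Am])
qed

lemma PV_deriv_within:
  assumes nu: "\<nu> > 0" and rho: "\<rho> > 1" and p: "p \<ge> 0"
  shows "(PV \<nu> \<rho> has_real_derivative PV' \<nu> \<rho> p) (at p within {0..})"
proof -
  have m: "(2*\<rho> - 1) / \<rho> > 1" using rho by (simp add: field_simps)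
  show ?thesis unfolding PV_alt[OF rho] PV_deriv_eq[OF nu rho p, symmetric]
    by (rule DERIV_cmult[OF powr_deriv_within[OF m p]])
qed

lemma PV_deriv:
  assumes nu: "\<nu> > 0" and rho: "\<rho> > 1" and p: "p > 0"
  shows "(PV \<nu> \<rho> has_real_derivative PV' \<nu> \<rho> p) (at p)"
proof -
  show ?thesis unfolding PV_alt[OF rho] PV_deriv_eq[OF nu rho less_imp_le[OF p], symmetric]
    by (rule DERIV_cmult[OF has_real_derivative_powr[OF p]])
qed

lemma PV_cont:
  assumes nu: "\<nu> > 0" and rho: "\<rho> > 1"
  shows "continuous_on {0..} (PV \<nu> \<rho>)"
  unfolding continuous_on_eq_continuous_within
  using PV_deriv_within[OF nu rho] DERIV_continuous by (metis atLeast_iff)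

lemma PV_0: "PV \<nu> \<rho> 0 = 0"
  unfolding PV_def by simp

lemma PV_nonneg:
  assumes nu: "\<nu> > 0" and rho: "\<rho> > 1"
  shows "PV \<nu> \<rho> p \<ge> 0"
  unfolding PV_def using nu rho by (intro mult_nonneg_nonneg) auto

lemma PV'_nonneg: assumes nu: "\<nu> > 0" and rho: "\<rho> > 1" shows "PV' \<nu> \<rho> p \<ge> 0"
  unfolding PV'_def using nu rho by auto

lemma poly_hjb:
  assumes nu: "\<nu> > 0" and rho: "\<rho> > 1" and p: "p > 0" and w: "w \<ge> 0"
  shows "PV' \<nu> \<rho> p * (w - \<alpha>) \<le> p + \<nu> * max 0 (w - \<alpha>) powr \<rho>"
proof (cases "w - \<alpha> \<le> 0")
  case True
  have "PV' \<nu> \<rho> p * (w - \<alpha>) \<le> 0" using True PV'_nonneg[OF nu rho] by (simp add: mult_nonneg_nonpos)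
  moreover have "\<nu> * max 0 (w - \<alpha>) powr \<rho> \<ge> 0" using nu by simp
  ultimately show ?thesis using p by linarith
next
  case False
  define z where "z = w - \<alpha>"
  define K where "K = \<nu> * (\<rho> - 1)"
  define q where "q = (\<rho> - 1) / \<rho>"
  define b where "b = (p / K) powr q"
  define Q where "Q = \<rho> / (\<rho> - 1)"
  have z: "z > 0" using False unfolding z_def by simp
  have K: "K > 0" unfolding K_def using nu rho by simp
  have b: "b \<ge> 0" unfolding b_def by simp
  have Q: "Q > 1" unfolding Q_def using rho by (simp add: field_simps)
  have bQ: "b powr Q = p / K" unfolding b_def powr_powr q_def Q_def using rho p K by simp
  have y: "z * b \<le> z powr \<rho> / \<rho> + b powr Q / Q"
    by (rule Youngs_inequality) (use rho Q z b in \<open>auto simp: Q_def field_simps\<close>)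
  then have "\<nu> * \<rho> * (z * b) \<le> \<nu> * \<rho> * (z powr \<rho> / \<rho> + (p / K) / Q)"
    using nu rho bQ by (intro mult_left_mono) auto
  also have "\<dots> = \<nu> * z powr \<rho> + p"
    unfolding Q_def K_def using nu rho by (simp add: field_simps)
  finally have fin: "\<nu> * \<rho> * (z * b) \<le> \<nu> * z powr \<rho> + p" .
  have e1: "PV' \<nu> \<rho> p * (w - \<alpha>) = \<nu> * \<rho> * (z * b)"
    unfolding PV'_def z_def b_def K_def q_def by (simp add: mult_ac)
  have e2: "max 0 (w - \<alpha>) = z" using z unfolding z_def by simp
  show ?thesis unfolding e1 e2 using fin by linarith
qed



lemma poly_h_cont:
  fixes \<nu> \<rho> \<alpha> :: real
  assumes "\<rho> > 1"
  shows "continuous_on UNIV (\<lambda>w. \<nu> * max 0 (w - \<alpha>) powr \<rho>)"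
proof -
  have c1: "continuous_on UNIV (\<lambda>w::real. max 0 (w - \<alpha>))" by (intro continuous_intros)
  have "continuous_on UNIV (\<lambda>w. max 0 (w - \<alpha>) powr \<rho>)"
    by (rule continuous_on_powr'[OF c1 continuous_on_const]) (use assms in auto)
  then show ?thesis by (rule continuous_on_mult_left)
qed

lemma poly_cost_eq:
  "fluid_cost (poly_cost \<nu> \<rho> \<alpha>) \<alpha> x0 u =
     (\<integral>\<^sup>+t\<in>{0..}. ennreal (fluid_state \<alpha> x0 u t + (\<lambda>w. \<nu> * max 0 (w - \<alpha>) powr \<rho>) (u t)) \<partial>lborel)"
  unfolding fluid_cost_def poly_cost_def by simp

lemma poly_lower:
  assumes nu: "\<nu> > 0" and rho: "\<rho> > 1" and adm: "fluid_admissible \<alpha> x0 u"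
  shows "ennreal (PV \<nu> \<rho> x0) \<le> fluid_cost (poly_cost \<nu> \<rho> \<alpha>) \<alpha> x0 u"
proof -
  have "ennreal (PV \<nu> \<rho> x0 - PV \<nu> \<rho> 0) \<le> fluid_cost (poly_cost \<nu> \<rho> \<alpha>) \<alpha> x0 u"
    unfolding poly_cost_eq
  proof (rule verif[OF adm PV_cont[OF nu rho] PV_deriv[OF nu rho]])
    show "\<And>p w. 0 < p \<Longrightarrow> 0 \<le> w \<Longrightarrow> PV' \<nu> \<rho> p * (w - \<alpha>) \<le> p + \<nu> * max 0 (w - \<alpha>) powr \<rho>"
      by (rule poly_hjb[OF nu rho])
    show "(\<lambda>w. \<nu> * max 0 (w - \<alpha>) powr \<rho>) \<in> borel_measurable borel"
      by (rule borel_measurable_continuous_onI[OF poly_h_cont[OF rho]])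
    show "\<And>w. 0 \<le> w \<Longrightarrow> 0 \<le> \<nu> * max 0 (w - \<alpha>) powr \<rho>" using nu by simp
  qed
  then show ?thesis by (simp add: PV_0)
qed

lemma SUP_indicator_nat:
  fixes f :: ennreal
  shows "(SUP n. f * indicator {0..real n} t) = f * indicator {0..} t"
proof (rule antisym)
  show "(SUP n. f * indicator {0..real n} t) \<le> f * indicator {0..} t"
    by (rule SUP_least) (auto simp: indicator_def)
  show "f * indicator {0..} t \<le> (SUP n. f * indicator {0..real n} t)"
  proof (cases "t \<ge> 0")
    case True
    obtain n where "t \<le> real n" by (meson real_arch_simple)
    then show ?thesis by (intro SUP_upper2[of n]) (auto simp: indicator_def True)
  next
    case False then show ?thesis by (simp add: indicator_def)
  qed
qed

lemma poly_feedback_upper: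
  assumes nu: "\<nu> > 0" and rho: "\<rho> > 1" and adm: "fluid_admissible \<alpha> x0 u"
    and fb: "\<forall>t\<ge>0. u t = (fluid_state \<alpha> x0 u t / (\<nu> * (\<rho> - 1))) powr (1/\<rho>) + \<alpha>"
  shows "fluid_cost (poly_cost \<nu> \<rho> \<alpha>) \<alpha> x0 u \<le> ennreal (PV \<nu> \<rho> x0)"
proof -
  define x where "x = fluid_state \<alpha> x0 u"
  define K where "K = \<nu> * (\<rho> - 1)"
  define g where "g = (\<lambda>t. (x t / K) powr (1/\<rho>))"
  define k1 where "k1 = \<rho> / (\<rho> - 1)"
  have K: "K > 0" unfolding K_def using nu rho by simp
  have xnn: "\<And>t. t \<ge> 0 \<Longrightarrow> x t \<ge> 0" using adm unfolding fluid_admissible_def x_def by auto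
  have xc: "continuous_on {0..} x" unfolding x_def by (rule state_cont[OF adm])
  have gc: "continuous_on {0..} g" unfolding g_def
    by (rule continuous_on_powr') (use xnn K rho in \<open>auto intro!: continuous_intros xc\<close>)
  have ug: "\<And>t. t \<ge> 0 \<Longrightarrow> u t = g t + \<alpha>" using fb unfolding g_def x_def K_def by auto
  have gpow: "g t powr \<rho> = x t / K" if "t \<ge> 0" for t
    unfolding g_def powr_powr using rho K xnn[OF that] by simp
  have integrand: "poly_cost \<nu> \<rho> \<alpha> (x t) (u t) = k1 * x t" if t: "t \<ge> 0" for t
  proof -
    have "max 0 (u t - \<alpha>) = g t" using ug[OF t] unfolding g_def by simp
    then have "poly_cost \<nu> \<rho> \<alpha> (x t) (u t) = x t + \<nu> * (x t / K)"
      unfolding poly_cost_def using gpow[OF t] by simp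
    also have "\<dots> = k1 * x t" unfolding k1_def K_def using nu rho by (simp add: field_simps)
    finally show ?thesis .
  qed
  have Vg: "PV' \<nu> \<rho> (x t) * g t = k1 * x t" if t: "t \<ge> 0" for t
  proof -
    have "PV' \<nu> \<rho> (x t) * g t = \<nu> * \<rho> * ((x t / K) powr ((\<rho> - 1) / \<rho>) * (x t / K) powr (1/\<rho>))"
      unfolding PV'_def g_def K_def by simp
    also have "(x t / K) powr ((\<rho> - 1) / \<rho>) * (x t / K) powr (1/\<rho>) = (x t / K) powr 1"
      unfolding powr_add[symmetric] using rho by (simp add: field_simps)
    also have "\<dots> = x t / K" using xnn[OF t] K by simp
    also have "\<nu> * \<rho> * (x t / K) = k1 * x t" unfolding k1_def K_def using nu rho by (simp add: field_simps)
    finally show ?thesis .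
  qed
  define xh where "xh = (\<lambda>t. x (max 0 t))"
  have xhm: "xh \<in> borel_measurable borel" unfolding xh_def x_def by (rule state_meas[OF adm])
  note xhm[measurable]
  have xhnn: "\<And>t. xh t \<ge> 0" unfolding xh_def using xnn by simp
  have k1nn: "k1 \<ge> 0" unfolding k1_def using rho by simp
  have fin: "(\<integral>\<^sup>+t. ennreal (k1 * xh t) * indicator {0..T} t \<partial>lborel) \<le> ennreal (PV \<nu> \<rho> x0)"
    if T: "T \<ge> 0" for T
  proof -
    have gcT: "continuous_on {0..T} g" by (rule continuous_on_subset[OF gc]) auto
    have sf: "x t = x0 - integral {0..t} g" if t: "t \<in> {0..T}" for t
    proof -
      have I: "set_integrable lborel {0..t} (\<lambda>s. \<alpha> - u s)" using adm_int[OF adm] t by auto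
      have "x t = x0 + integral {0..t} (\<lambda>s. \<alpha> - u s)"
        unfolding x_def fluid_state_def set_borel_integral_eq_integral(2)[OF I] ..
      also have "integral {0..t} (\<lambda>s. \<alpha> - u s) = integral {0..t} (\<lambda>s. - g s)"
        by (rule integral_cong) (auto simp: ug)
      finally show ?thesis by simp
    qed
    have xd: "(x has_real_derivative (- g t)) (at t within {0..T})" if t: "t \<in> {0..T}" for t
    proof -
      have d1: "((\<lambda>s. integral {0..s} g) has_real_derivative g t) (at t within {0..T})"
        using integral_has_vector_derivative[OF gcT t] by (simp add: has_real_derivative_iff_has_vector_derivative)
      have "((\<lambda>s. x0 - integral {0..s} g) has_real_derivative (0 - g t)) (at t within {0..T})"
        by (rule DERIV_diff[OF DERIV_const d1])
      then have "((\<lambda>s. x0 - integral {0..s} g) has_real_derivative (- g t)) (at t within {0..T})" by simp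
      then show ?thesis
        by (rule has_field_derivative_transform_within[of _ _ t _ 1]) (use t sf in auto)
    qed
    have Vd: "((PV \<nu> \<rho> \<circ> x) has_vector_derivative (- (k1 * x t))) (at t within {0..T})" if t: "t \<in> {0..T}" for t
    proof -
      have t0: "t \<ge> 0" using t by auto
      have sub: "x ` {0..T} \<subseteq> {0..}"
      proof (rule image_subsetI)
        fix s :: real assume "s \<in> {0..T}"
        then have "s \<ge> 0" by simp
        then show "x s \<in> {0..}" using xnn[of s] by simp
      qed
      have "(PV \<nu> \<rho> has_real_derivative PV' \<nu> \<rho> (x t)) (at (x t) within {0..})"
        by (rule PV_deriv_within[OF nu rho xnn[OF t0]])
      then have "(PV \<nu> \<rho> has_real_derivative PV' \<nu> \<rho> (x t)) (at (x t) within x ` {0..T})"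
        using sub by (rule DERIV_subset)
      from DERIV_image_chain[OF this xd[OF t]]
      have "((PV \<nu> \<rho> \<circ> x) has_real_derivative PV' \<nu> \<rho> (x t) * - g t) (at t within {0..T})" .
      moreover have "PV' \<nu> \<rho> (x t) * - g t = - (k1 * x t)" using Vg[of t] t by simp
      ultimately show ?thesis by (simp add: has_real_derivative_iff_has_vector_derivative)
    qed
    have ftc: "((\<lambda>t. - (k1 * x t)) has_integral ((PV \<nu> \<rho> \<circ> x) T - (PV \<nu> \<rho> \<circ> x) 0)) {0..T}"
      by (rule fundamental_theorem_of_calculus[OF T Vd])
    have "((\<lambda>t. k1 * x t) has_integral (PV \<nu> \<rho> x0 - PV \<nu> \<rho> (x T))) {0..T}"
      using has_integral_neg[OF ftc] state_0[of \<alpha> x0 u] unfolding x_def by simp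
    then have "((\<lambda>t. k1 * xh t) has_integral (PV \<nu> \<rho> x0 - PV \<nu> \<rho> (x T))) {0..T}"
      by (rule has_integral_cong[THEN iffD1, rotated]) (auto simp: xh_def)
    then have hi0: "((\<lambda>t. if t \<in> {0..T} then k1 * xh t else 0) has_integral (PV \<nu> \<rho> x0 - PV \<nu> \<rho> (x T))) UNIV"
      by (simp only: has_integral_restrict_UNIV)
    have ie: "(\<lambda>t. if t \<in> {0..T} then k1 * xh t else 0) = (\<lambda>t. indicator {0..T} t * (k1 * xh t))"
      by (rule ext) (simp only: indicator_def split: if_splits, simp)
    have hi: "((\<lambda>t. indicator {0..T} t * (k1 * xh t)) has_integral (PV \<nu> \<rho> x0 - PV \<nu> \<rho> (x T))) UNIV"
      using hi0 unfolding ie .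
    have "(\<integral>\<^sup>+t. ennreal (indicator {0..T} t * (k1 * xh t)) \<partial>lborel) = ennreal (PV \<nu> \<rho> x0 - PV \<nu> \<rho> (x T))"
    proof (rule nn_integral_has_integral_lborel[OF _ _ hi])
      show "(\<lambda>t. indicator {0..T} t * (k1 * xh t)) \<in> borel_measurable borel" by measurable
      show "\<And>t. 0 \<le> indicator {0..T} t * (k1 * xh t)"
        using k1nn xhnn by (intro mult_nonneg_nonneg) auto
    qed
    moreover have "(\<integral>\<^sup>+t. ennreal (k1 * xh t) * indicator {0..T} t \<partial>lborel) = (\<integral>\<^sup>+t. ennreal (indicator {0..T} t * (k1 * xh t)) \<partial>lborel)"
      by (intro nn_integral_cong) (auto simp: indicator_def)
    moreover have "PV \<nu> \<rho> (x T) \<ge> 0" by (rule PV_nonneg[OF nu rho])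
    ultimately show ?thesis by (simp add: ennreal_leI)
  qed
  have "fluid_cost (poly_cost \<nu> \<rho> \<alpha>) \<alpha> x0 u = (\<integral>\<^sup>+t. ennreal (k1 * xh t) * indicator {0..} t \<partial>lborel)"
    unfolding fluid_cost_def x_def[symmetric]
    by (intro nn_integral_cong) (auto simp: indicator_def integrand xh_def)
  also have "\<dots> = (\<integral>\<^sup>+t. (SUP n. ennreal (k1 * xh t) * indicator {0..real n} t) \<partial>lborel)"
    by (simp add: SUP_indicator_nat)
  also have "\<dots> = (SUP n. (\<integral>\<^sup>+t. ennreal (k1 * xh t) * indicator {0..real n} t \<partial>lborel))"
  proof (rule nn_integral_monotone_convergence_SUP)
    show "incseq (\<lambda>n t. ennreal (k1 * xh t) * indicator {0..real n} t)"
      by (auto simp: incseq_def le_fun_def indicator_def intro!: mult_left_mono)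
    show "\<And>n. (\<lambda>t. ennreal (k1 * xh t) * indicator {0..real n} t) \<in> borel_measurable lborel" by measurable
  qed
  also have "\<dots> \<le> ennreal (PV \<nu> \<rho> x0)" by (rule SUP_least) (rule fin, simp)
  finally show ?thesis .
qed



lemma poly_exists:
  fixes \<alpha> \<nu> \<rho> x0 :: real
  assumes al: "\<alpha> > 0" and nu: "\<nu> > 0" and rho: "\<rho> > 1" and x0: "x0 \<ge> 0"
  shows "\<exists>u. fluid_admissible \<alpha> x0 u \<and> (\<forall>t\<ge>0. u t = (fluid_state \<alpha> x0 u t / (\<nu> * (\<rho> - 1))) powr (1/\<rho>) + \<alpha>)"
proof -
  define K where "K = \<nu> * (\<rho> - 1)"
  define r where "r = 1 / \<rho>"
  define q where "q = (\<rho> - 1) / \<rho>"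
  define M where "M = \<rho> / (\<rho> - 1)"
  define a where "a = x0 powr q"
  define k where "k = q / K powr r"
  have K: "K > 0" unfolding K_def using nu rho by simp
  have r: "r > 0" unfolding r_def using rho by simp
  have q: "q > 0" unfolding q_def using rho by simp
  have M: "M > 0" unfolding M_def using rho by simp
  have k: "k > 0" unfolding k_def using q K by simp
  have a: "a \<ge> 0" unfolding a_def by simp
  have Mq: "M * q = 1" unfolding M_def q_def using rho by (simp add: field_simps)
  have Mr: "M * r = M - 1" unfolding M_def r_def using rho by (simp add: field_simps)
  define Y where "Y = (\<lambda>t. max 0 (a - k * t))"
  define X where "X = (\<lambda>t. Y t powr M)"
  define U where "U = (\<lambda>t. (X t / K) powr r + \<alpha>)"
  have Yc: "continuous_on UNIV Y" unfolding Y_def by (intro continuous_intros)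
  have Ynn: "\<And>t. Y t \<ge> 0" unfolding Y_def by simp
  have Xc: "continuous_on UNIV X" unfolding X_def
    by (rule continuous_on_powr'[OF Yc continuous_on_const]) (use Ynn M in auto)
  have Xnn: "\<And>t. X t \<ge> 0" unfolding X_def by simp
  have XKc: "continuous_on UNIV (\<lambda>t. X t / K)" by (intro continuous_intros Xc) (use K in auto)
  have Uc: "continuous_on UNIV U" unfolding U_def
    by (intro continuous_intros continuous_on_powr'[OF XKc continuous_on_const]) (use Xnn K r in auto)
  have Xd: "(X has_real_derivative (\<alpha> - U t)) (at t)" if t: "t > 0" "t \<notin> {a / k}" for t
  proof (cases "a - k * t > 0")
    case True
    have tin: "t \<in> {..<a/k}" using True k by (simp add: field_simps)
    have ev: "eventually (\<lambda>s. X s = (a - k * s) powr M) (nhds t)"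
    proof (rule eventually_mono[OF eventually_nhds_in_open[OF open_lessThan tin]])
      fix s assume "s \<in> {..<a/k}"
      then have "a - k * s > 0" using k by (simp add: field_simps)
      then show "X s = (a - k * s) powr M" unfolding X_def Y_def by simp
    qed
    have d0: "DERIV (\<lambda>s. a - k * s) t :> - k" by (auto intro!: derivative_eq_intros)
    have d1: "DERIV (\<lambda>s. (a - k * s) powr M) t :> M * (a - k * t) powr (M - 1) * (- k)"
      using DERIV_fun_powr[OF d0 True, of M] by simp
    have val: "M * (a - k * t) powr (M - 1) * (- k) = \<alpha> - U t"
    proof -
      have "X t = (a - k * t) powr M" unfolding X_def Y_def using True by simp
      then have "(X t / K) powr r = (a - k * t) powr (M - 1) / K powr r"
        by (simp add: powr_divide powr_powr Mr)
      moreover have "M * k = 1 / K powr r" unfolding k_def using Mq by (simp add: field_simps)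
      moreover have "M * (a - k * t) powr (M - 1) * (- k) = - ((M * k) * (a - k * t) powr (M - 1))"
        by (simp add: mult_ac)
      ultimately show ?thesis unfolding U_def by simp
    qed
    show ?thesis using d1 unfolding val by (subst DERIV_cong_ev[OF refl ev refl])
  next
    case False
    then have "a - k * t < 0" using t k by (auto simp: field_simps)
    then have tin: "t \<in> {a/k<..}" using k by (simp add: field_simps)
    have ev: "eventually (\<lambda>s. X s = 0) (nhds t)"
    proof (rule eventually_mono[OF eventually_nhds_in_open[OF open_greaterThan tin]])
      fix s assume "s \<in> {a/k<..}"
      then have "a - k * s < 0" using k by (simp add: field_simps)
      then show "X s = 0" unfolding X_def Y_def by simp
    qed
    have Xt: "X t = 0" using ev by (auto simp: eventually_nhds)
    have val: "\<alpha> - U t = 0" unfolding U_def Xt by simp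
    show ?thesis unfolding val by (subst DERIV_cong_ev[OF refl ev refl]) simp
  qed
  have X0: "X 0 = x0" unfolding X_def Y_def a_def using x0 Mq by (simp add: powr_powr mult.commute)
  have Unn: "\<And>t. U t \<ge> 0" unfolding U_def using al by (simp add: add_nonneg_nonneg)
  have E: "fluid_admissible \<alpha> x0 U" "\<And>t. t \<ge> 0 \<Longrightarrow> fluid_state \<alpha> x0 U t = X t"
    using explicit_adm[OF Xc Uc finite.insertI[OF finite.emptyI, of "a/k"] Xd X0 Unn Xnn] by auto
  show ?thesis
  proof (intro exI conjI allI impI)
    show "fluid_admissible \<alpha> x0 U" by (rule E(1))
    fix t :: real assume "t \<ge> 0"
    then show "U t = (fluid_state \<alpha> x0 U t / (\<nu> * (\<rho> - 1))) powr (1/\<rho>) + \<alpha>"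
      unfolding K_def[symmetric] r_def[symmetric] E(2)[OF \<open>t \<ge> 0\<close>] by (simp add: U_def)
  qed
qed

lemma part1:
  fixes \<alpha> \<nu> \<rho> :: real
  assumes al: "\<alpha> > 0" and nu: "\<nu> > 0" and rho: "\<rho> > 1"
  shows "\<forall>x0\<ge>0.
       fluid_value (poly_cost \<nu> \<rho> \<alpha>) \<alpha> x0 =
         ennreal (\<nu> * x0 powr ((2*\<rho> - 1) / \<rho>) * (\<rho>^2 / (2*\<rho> - 1))
                  * (1 / (\<nu> * (\<rho> - 1))) powr ((\<rho> - 1) / \<rho>))
     \<and> (\<exists>u. fluid_admissible \<alpha> x0 u \<and>
            (\<forall>t\<ge>0. u t = (fluid_state \<alpha> x0 u t / (\<nu> * (\<rho> - 1))) powr (1/\<rho>) + \<alpha>))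
     \<and> (\<forall>u. fluid_admissible \<alpha> x0 u \<and>
            (\<forall>t\<ge>0. u t = (fluid_state \<alpha> x0 u t / (\<nu> * (\<rho> - 1))) powr (1/\<rho>) + \<alpha>)
            \<longrightarrow> fluid_cost (poly_cost \<nu> \<rho> \<alpha>) \<alpha> x0 u = fluid_value (poly_cost \<nu> \<rho> \<alpha>) \<alpha> x0)"
proof (intro allI impI)
  fix x0 :: real assume x0: "x0 \<ge> 0"
  obtain us where us: "fluid_admissible \<alpha> x0 us" "\<forall>t\<ge>0. us t = (fluid_state \<alpha> x0 us t / (\<nu> * (\<rho> - 1))) powr (1/\<rho>) + \<alpha>"
    using poly_exists[OF al nu rho x0] by blast
  have val: "fluid_value (poly_cost \<nu> \<rho> \<alpha>) \<alpha> x0 = ennreal (PV \<nu> \<rho> x0)"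
    unfolding fluid_value_def
  proof (rule antisym)
    show "(INF u\<in>{u. fluid_admissible \<alpha> x0 u}. fluid_cost (poly_cost \<nu> \<rho> \<alpha>) \<alpha> x0 u) \<le> ennreal (PV \<nu> \<rho> x0)"
      by (rule INF_lower2[of us]) (use us poly_feedback_upper[OF nu rho us(1) us(2)] in auto)
    show "ennreal (PV \<nu> \<rho> x0) \<le> (INF u\<in>{u. fluid_admissible \<alpha> x0 u}. fluid_cost (poly_cost \<nu> \<rho> \<alpha>) \<alpha> x0 u)"
      by (rule INF_greatest) (use poly_lower[OF nu rho] in auto)
  qed
  show "fluid_value (poly_cost \<nu> \<rho> \<alpha>) \<alpha> x0 =
         ennreal (\<nu> * x0 powr ((2*\<rho> - 1) / \<rho>) * (\<rho>^2 / (2*\<rho> - 1))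
                  * (1 / (\<nu> * (\<rho> - 1))) powr ((\<rho> - 1) / \<rho>))
     \<and> (\<exists>u. fluid_admissible \<alpha> x0 u \<and>
            (\<forall>t\<ge>0. u t = (fluid_state \<alpha> x0 u t / (\<nu> * (\<rho> - 1))) powr (1/\<rho>) + \<alpha>))
     \<and> (\<forall>u. fluid_admissible \<alpha> x0 u \<and>
            (\<forall>t\<ge>0. u t = (fluid_state \<alpha> x0 u t / (\<nu> * (\<rho> - 1))) powr (1/\<rho>) + \<alpha>)
            \<longrightarrow> fluid_cost (poly_cost \<nu> \<rho> \<alpha>) \<alpha> x0 u = fluid_value (poly_cost \<nu> \<rho> \<alpha>) \<alpha> x0)"
  proof (intro conjI allI impI)
    show "fluid_value (poly_cost \<nu> \<rho> \<alpha>) \<alpha> x0 =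
         ennreal (\<nu> * x0 powr ((2*\<rho> - 1) / \<rho>) * (\<rho>^2 / (2*\<rho> - 1))
                  * (1 / (\<nu> * (\<rho> - 1))) powr ((\<rho> - 1) / \<rho>))"
      unfolding val PV_def ..
    show "\<exists>u. fluid_admissible \<alpha> x0 u \<and>
            (\<forall>t\<ge>0. u t = (fluid_state \<alpha> x0 u t / (\<nu> * (\<rho> - 1))) powr (1/\<rho>) + \<alpha>)"
      using us by blast
    fix u assume u: "fluid_admissible \<alpha> x0 u \<and>
            (\<forall>t\<ge>0. u t = (fluid_state \<alpha> x0 u t / (\<nu> * (\<rho> - 1))) powr (1/\<rho>) + \<alpha>)"
    show "fluid_cost (poly_cost \<nu> \<rho> \<alpha>) \<alpha> x0 u = fluid_value (poly_cost \<nu> \<rho> \<alpha>) \<alpha> x0"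
    proof (rule antisym)
      show "fluid_cost (poly_cost \<nu> \<rho> \<alpha>) \<alpha> x0 u \<le> fluid_value (poly_cost \<nu> \<rho> \<alpha>) \<alpha> x0"
        unfolding val using poly_feedback_upper[OF nu rho] u by blast
      show "fluid_value (poly_cost \<nu> \<rho> \<alpha>) \<alpha> x0 \<le> fluid_cost (poly_cost \<nu> \<rho> \<alpha>) \<alpha> x0 u"
        unfolding fluid_value_def using u by (intro INF_lower) auto
    qed
  qed
qed



definition EA :: "real \<Rightarrow> real \<Rightarrow> real \<Rightarrow> real" where
  "EA \<kappa> \<beta> p = \<kappa> * (p - \<beta>)^2 / 4"
definition EB :: "real \<Rightarrow> real \<Rightarrow> real \<Rightarrow> real" where
  "EB \<kappa> \<beta> p = \<kappa> / 2 * ((p - \<beta>)^2 / (ln (p - \<beta>) - ln \<beta> - 1)) - \<kappa> * (\<beta> * exp 2)^2 / 4"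
definition EV :: "real \<Rightarrow> real \<Rightarrow> real \<Rightarrow> real" where
  "EV \<kappa> \<beta> p = (if p \<le> \<beta> then 0 else if p \<le> \<beta> + \<beta> * exp 2 then EA \<kappa> \<beta> p else EB \<kappa> \<beta> p)"
definition EV' :: "real \<Rightarrow> real \<Rightarrow> real \<Rightarrow> real" where
  "EV' \<kappa> \<beta> p = (if p \<le> \<beta> then 0 else if p \<le> \<beta> + \<beta> * exp 2 then \<kappa> * (p - \<beta>) / 2
     else \<kappa> * ((p - \<beta>) / (ln (p - \<beta>) - ln \<beta> - 1) - (p - \<beta>) / (2 * (ln (p - \<beta>) - ln \<beta> - 1)^2)))"

lemma EA_deriv: "(EA \<kappa> \<beta> has_real_derivative \<kappa> * (p - \<beta>) / 2) (at p)"
  unfolding EA_def by (auto intro!: derivative_eq_intros simp: field_simps power2_eq_square)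

lemma EB_alg:
  fixes y D \<kappa> :: real
  assumes "y > 0" "D \<noteq> 0"
  shows "\<kappa> / 2 * ((2 * y * D - y^2 * (1 / y)) / (D * D)) - 0 = \<kappa> * (y / D - y / (2 * D^2))"
  using assms by (simp add: field_simps power2_eq_square)

lemma EB_deriv:
  assumes "p - \<beta> > 0" "ln (p - \<beta>) - ln \<beta> - 1 \<noteq> 0"
  shows "(EB \<kappa> \<beta> has_real_derivative
     \<kappa> * ((p - \<beta>) / (ln (p - \<beta>) - ln \<beta> - 1) - (p - \<beta>) / (2 * (ln (p - \<beta>) - ln \<beta> - 1)^2))) (at p)"
proof -
  have d1: "((\<lambda>p. (p - \<beta>)^2) has_real_derivative 2 * (p - \<beta>)) (at p)"
    by (auto intro!: derivative_eq_intros)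
  have d2: "((\<lambda>p. ln (p - \<beta>) - ln \<beta> - 1) has_real_derivative 1 / (p - \<beta>)) (at p)"
    using assms by (auto intro!: derivative_eq_intros)
  have d3: "((\<lambda>p. (p - \<beta>)^2 / (ln (p - \<beta>) - ln \<beta> - 1)) has_real_derivative
      (2 * (p - \<beta>) * (ln (p - \<beta>) - ln \<beta> - 1) - (p - \<beta>)^2 * (1 / (p - \<beta>))) /
      ((ln (p - \<beta>) - ln \<beta> - 1) * (ln (p - \<beta>) - ln \<beta> - 1))) (at p)"
    by (rule DERIV_divide[OF d1 d2 assms(2)])
  have d4: "(EB \<kappa> \<beta> has_real_derivative
      \<kappa> / 2 * ((2 * (p - \<beta>) * (ln (p - \<beta>) - ln \<beta> - 1) - (p - \<beta>)^2 * (1 / (p - \<beta>))) /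
      ((ln (p - \<beta>) - ln \<beta> - 1) * (ln (p - \<beta>) - ln \<beta> - 1))) - 0) (at p)"
    unfolding EB_def by (rule DERIV_diff[OF DERIV_cmult[OF d3] DERIV_const])
  show ?thesis using d4 unfolding EB_alg[OF assms] .
qed

lemma EV_deriv:
  fixes \<kappa> \<beta> :: real
  assumes b: "\<beta> > 0"
  shows "(EV \<kappa> \<beta> has_real_derivative EV' \<kappa> \<beta> p) (at p)"
proof -
  define c where "c = \<beta> + \<beta> * exp 2"
  have bc: "\<beta> < c" unfolding c_def using b by simp
  have Dc: "ln (c - \<beta>) - ln \<beta> - 1 = 1" unfolding c_def using b by (simp add: ln_mult)
  have EVe: "EV \<kappa> \<beta> = (\<lambda>p. if p \<le> \<beta> then 0 else if p \<le> c then EA \<kappa> \<beta> p else EB \<kappa> \<beta> p)"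
    unfolding EV_def c_def by auto
  have EV'e: "EV' \<kappa> \<beta> = (\<lambda>p. if p \<le> \<beta> then 0 else if p \<le> c then \<kappa> * (p - \<beta>) / 2 else
     \<kappa> * ((p - \<beta>) / (ln (p - \<beta>) - ln \<beta> - 1) - (p - \<beta>) / (2 * (ln (p - \<beta>) - ln \<beta> - 1)^2)))"
    unfolding EV'_def c_def by auto
  have EBd: "(EB \<kappa> \<beta> has_real_derivative
     \<kappa> * ((q - \<beta>) / (ln (q - \<beta>) - ln \<beta> - 1) - (q - \<beta>) / (2 * (ln (q - \<beta>) - ln \<beta> - 1)^2))) (at q)"
    if q: "q \<ge> c" for q
  proof (rule EB_deriv)
    show "q - \<beta> > 0" using q bc by simp
    have "ln (q - \<beta>) \<ge> ln (c - \<beta>)" using q bc by simp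
    then show "ln (q - \<beta>) - ln \<beta> - 1 \<noteq> 0" using Dc by simp
  qed
  consider "p < \<beta>" | "p = \<beta>" | "\<beta> < p \<and> p < c" | "p = c" | "c < p" by linarith
  then show ?thesis
  proof cases
    case 1
    have ev: "eventually (\<lambda>s. EV \<kappa> \<beta> s = 0) (nhds p)"
      by (rule eventually_mono[OF eventually_nhds_in_open[OF open_lessThan, of p \<beta>]]) (use 1 in \<open>auto simp: EV_def\<close>)
    have "EV' \<kappa> \<beta> p = 0" using 1 by (simp add: EV'_def)
    then show ?thesis by (subst DERIV_cong_ev[OF refl ev refl]) simp
  next
    case 2
    have ev: "eventually (\<lambda>s. (if s \<le> c then EA \<kappa> \<beta> s else EB \<kappa> \<beta> s) = EA \<kappa> \<beta> s) (nhds p)"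
      by (rule eventually_mono[OF eventually_nhds_in_open[OF open_lessThan, of p c]]) (use 2 bc in auto)
    have hA: "((\<lambda>s. if s \<le> c then EA \<kappa> \<beta> s else EB \<kappa> \<beta> s) has_real_derivative 0) (at \<beta>)"
      using EA_deriv[of \<kappa> \<beta> \<beta>] by (subst DERIV_cong_ev[OF refl ev[unfolded 2] refl]) simp
    have "((\<lambda>s. if s \<le> \<beta> then (\<lambda>_. 0) s else (\<lambda>s. if s \<le> c then EA \<kappa> \<beta> s else EB \<kappa> \<beta> s) s) has_real_derivative 0) (at \<beta>)"
      by (rule DERIV_piecewise[OF DERIV_const hA]) (use bc in \<open>simp add: EA_def\<close>)
    then show ?thesis unfolding EVe EV'e 2 by simp
  next
    case 3
    have ev: "eventually (\<lambda>s. EV \<kappa> \<beta> s = EA \<kappa> \<beta> s) (nhds p)"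
      by (rule eventually_mono[OF eventually_nhds_in_open[OF open_greaterThanLessThan, of p \<beta> c]])
         (use 3 in \<open>auto simp: EVe\<close>)
    have e: "EV' \<kappa> \<beta> p = \<kappa> * (p - \<beta>) / 2" using 3 by (simp add: EV'e)
    show ?thesis unfolding e by (subst DERIV_cong_ev[OF refl ev refl]) (rule EA_deriv)
  next
    case 4
    have ev: "eventually (\<lambda>s. EV \<kappa> \<beta> s = (if s \<le> c then EA \<kappa> \<beta> s else EB \<kappa> \<beta> s)) (nhds p)"
      by (rule eventually_mono[OF eventually_nhds_in_open[OF open_greaterThan, of p \<beta>]])
         (use 4 bc in \<open>auto simp: EVe\<close>)
    have hB: "(EB \<kappa> \<beta> has_real_derivative \<kappa> * (c - \<beta>) / 2) (at c)"
      using EBd[of c] Dc by (simp add: field_simps)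
    have "((\<lambda>s. if s \<le> c then EA \<kappa> \<beta> s else EB \<kappa> \<beta> s) has_real_derivative \<kappa> * (c - \<beta>) / 2) (at c)"
    proof (rule DERIV_piecewise[OF EA_deriv hB])
      show "EA \<kappa> \<beta> c = EB \<kappa> \<beta> c" unfolding EA_def EB_def Dc unfolding c_def by (simp add: field_simps power2_eq_square)
    qed
    moreover have e: "EV' \<kappa> \<beta> p = \<kappa> * (c - \<beta>) / 2" using 4 bc by (simp add: EV'e)
    ultimately show ?thesis unfolding e unfolding 4 by (subst DERIV_cong_ev[OF refl ev[unfolded 4] refl])
  next
    case 5
    have ev: "eventually (\<lambda>s. EV \<kappa> \<beta> s = EB \<kappa> \<beta> s) (nhds p)"
      by (rule eventually_mono[OF eventually_nhds_in_open[OF open_greaterThan, of p c]])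
         (use 5 bc in \<open>auto simp: EVe\<close>)
    have "EV' \<kappa> \<beta> p = \<kappa> * ((p - \<beta>) / (ln (p - \<beta>) - ln \<beta> - 1) - (p - \<beta>) / (2 * (ln (p - \<beta>) - ln \<beta> - 1)^2))"
      using 5 bc by (simp add: EV'e)
    then show ?thesis using EBd[of p] 5 by (subst DERIV_cong_ev[OF refl ev refl]) simp
  qed
qed

lemma EV_cont:
  assumes "\<beta> > 0"
  shows "continuous_on {0..} (EV \<kappa> \<beta>)"
  by (rule continuous_at_imp_continuous_on) (use EV_deriv[OF assms] DERIV_isCont in blast)



definition EQF :: "real \<Rightarrow> real \<Rightarrow> real" where
  "EQF \<beta> p = (if p \<le> \<beta> then 0 else if p \<le> \<beta> + \<beta> * exp 2 then (p - \<beta>) / 2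
     else (p - \<beta>) / (ln (p - \<beta>) - ln \<beta> - 1) - (p - \<beta>) / (2 * (ln (p - \<beta>) - ln \<beta> - 1)^2))"

lemma EV'_EQ: "EV' \<kappa> \<beta> p = \<kappa> * EQF \<beta> p"
  unfolding EV'_def EQF_def by (simp add: algebra_simps)

lemma EQF_props:
  assumes b: "\<beta> > 0"
  shows "EQF \<beta> p \<ge> 0 \<and> (EQF \<beta> p \<le> \<beta> \<or> EQF \<beta> p * (ln (EQF \<beta> p / \<beta>) - 1) \<le> p - \<beta>)"
proof -
  define y where "y = p - \<beta>"
  consider "p \<le> \<beta>" | "\<beta> < p \<and> p \<le> \<beta> + \<beta> * exp 2" | "\<beta> + \<beta> * exp 2 < p" by linarith
  then show ?thesis
  proof cases
    case 1 then show ?thesis unfolding EQF_def using b by simp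
  next
    case 2
    then have q: "EQF \<beta> p = y / 2" unfolding EQF_def y_def by simp
    have y: "y > 0" "y \<le> \<beta> * exp 2" using 2 unfolding y_def by auto
    have "y / 2 \<le> \<beta> \<or> y / 2 * (ln (y / 2 / \<beta>) - 1) \<le> y"
    proof (cases "y / 2 \<le> \<beta>")
      case False
      have "y / 2 / \<beta> \<le> exp 2" using y b by (simp add: field_simps)
      then have "ln (y / 2 / \<beta>) \<le> ln (exp 2)" using y b by (subst ln_le_cancel_iff) auto
      then have "ln (y / 2 / \<beta>) - 1 \<le> 1" by simp
      then have "y / 2 * (ln (y / 2 / \<beta>) - 1) \<le> y / 2 * 1" using y by (intro mult_left_mono) auto
      then show ?thesis using y by simp
    qed simp
    then show ?thesis unfolding q y_def using y by (auto simp: y_def)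
  next
    case 3
    define D where "D = ln y - ln \<beta> - 1"
    have y: "y > \<beta> * exp 2" using 3 unfolding y_def by simp
    have "\<beta> * exp 2 > 0" using b by simp
    then have yp: "y > 0" using y by linarith
    have "ln y > ln (\<beta> * exp 2)" using y b yp by (subst ln_less_cancel_iff) auto
    then have D1: "D > 1" unfolding D_def using b by (simp add: ln_mult)
    have q: "EQF \<beta> p = y / D - y / (2 * D^2)" using 3 \<open>\<beta> * exp 2 > 0\<close> unfolding EQF_def y_def D_def by (auto simp: not_le)
    have qle: "y / D - y / (2 * D^2) \<le> y / D" using yp D1 by simp
    have qnn: "y / D - y / (2 * D^2) \<ge> 0"
    proof -
      have "y / (2 * D^2) \<le> y / D" using yp D1 by (simp add: field_simps power2_eq_square)
      then show ?thesis by simp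
    qed
    define q where "q = y / D - y / (2 * D^2)"
    have "q \<le> \<beta> \<or> q * (ln (q / \<beta>) - 1) \<le> y"
    proof (cases "q \<le> \<beta>")
      case False
      then have qp: "q > 0" using b by simp
      have lnD: "ln D \<le> D - 1" using D1 by (intro ln_le_minus_one) simp
      have lnD0: "ln D \<ge> 0" using D1 by simp
      have "q / \<beta> \<le> (y / D) / \<beta>" using qle b unfolding q_def by (intro divide_right_mono) auto
      then have "q / \<beta> \<le> y / (D * \<beta>)" by simp
      then have "ln (q / \<beta>) \<le> ln (y / (D * \<beta>))" using qp b yp D1 by (subst ln_le_cancel_iff) auto
      also have "ln (y / (D * \<beta>)) = ln y - ln D - ln \<beta>" using yp D1 b by (simp add: ln_div ln_mult)
      finally have l: "ln (q / \<beta>) - 1 \<le> D - ln D" unfolding D_def by simp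
      have "q * (ln (q / \<beta>) - 1) \<le> q * (D - ln D)" using qp l by (intro mult_left_mono) auto
      also have "\<dots> \<le> y / D * (D - ln D)" using qle lnD D1 unfolding q_def by (intro mult_right_mono) auto
      also have "\<dots> = y - y * ln D / D" using D1 by (simp add: field_simps)
      also have "\<dots> \<le> y" using yp D1 lnD0 by simp
      finally show ?thesis by simp
    qed simp
    then show ?thesis unfolding q[folded q_def] using qnn unfolding q_def y_def by auto
  qed
qed

lemma exp_hjb:
  assumes nu: "\<nu> > 0" and ka: "\<kappa> > 0" and p: "p > 0"
  shows "EV' \<kappa> (\<nu> * exp (\<kappa> * \<alpha>)) p * (w - \<alpha>) \<le> p + \<nu> * max 0 (exp (\<kappa> * w) - exp (\<kappa> * \<alpha>))"
proof -
  define \<beta> where "\<beta> = \<nu> * exp (\<kappa> * \<alpha>)"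
  define q where "q = EQF \<beta> p"
  define z where "z = w - \<alpha>"
  have b: "\<beta> > 0" unfolding \<beta>_def using nu by simp
  have Q: "q \<ge> 0" "q \<le> \<beta> \<or> q * (ln (q / \<beta>) - 1) \<le> p - \<beta>" using EQF_props[OF b, of p] unfolding q_def by auto
  have mnn: "\<nu> * max 0 (exp (\<kappa> * w) - exp (\<kappa> * \<alpha>)) \<ge> 0" using nu by simp
  show ?thesis
  proof (cases "z \<le> 0")
    case True
    have "\<kappa> * q * z \<le> 0" using True Q ka by (simp add: mult_nonneg_nonpos)
    then show ?thesis unfolding EV'_EQ \<beta>_def[symmetric] q_def[symmetric] z_def[symmetric] using mnn p by linarith
  next
    case False
    then have z: "z > 0" by simp
    have ew: "exp (\<kappa> * w) = exp (\<kappa> * \<alpha>) * exp (\<kappa> * z)" unfolding z_def by (simp add: exp_add[symmetric] algebra_simps)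
    have e1: "exp (\<kappa> * z) \<ge> 1" using z ka by simp
    have rhs: "\<nu> * max 0 (exp (\<kappa> * w) - exp (\<kappa> * \<alpha>)) = \<beta> * exp (\<kappa> * z) - \<beta>"
    proof -
      have "exp (\<kappa> * w) - exp (\<kappa> * \<alpha>) = exp (\<kappa> * \<alpha>) * (exp (\<kappa> * z) - 1)" unfolding ew by (simp add: algebra_simps)
      moreover have "exp (\<kappa> * \<alpha>) * (exp (\<kappa> * z) - 1) \<ge> 0" using e1 by simp
      ultimately show ?thesis unfolding \<beta>_def by (simp add: algebra_simps)
    qed
    have key: "\<kappa> * q * z \<le> p + (\<beta> * exp (\<kappa> * z) - \<beta>)"
    proof (cases "q \<le> \<beta>")
      case True
      have "\<beta> * (1 + \<kappa> * z) \<le> \<beta> * exp (\<kappa> * z)" using b by (intro mult_left_mono exp_ge_add_one_self) auto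
      moreover have "q * (\<kappa> * z) \<le> \<beta> * (\<kappa> * z)" using True z ka by (intro mult_right_mono) auto
      ultimately show ?thesis using p by (simp add: algebra_simps)
    next
      case False
      then have qb: "q > \<beta>" and Q2: "q * (ln (q / \<beta>) - 1) \<le> p - \<beta>" using Q by auto
      define c where "c = ln (q / \<beta>)"
      have ec: "exp c = q / \<beta>" unfolding c_def using qb b by simp
      have "exp (\<kappa> * z) = exp c * exp (\<kappa> * z - c)" by (simp add: exp_add[symmetric])
      also have "\<dots> \<ge> exp c * (1 + (\<kappa> * z - c))" by (intro mult_left_mono exp_ge_add_one_self) auto
      finally have "\<beta> * exp (\<kappa> * z) \<ge> \<beta> * (exp c * (1 + (\<kappa> * z - c)))" using b by (intro mult_left_mono) auto
      also have "\<beta> * (exp c * (1 + (\<kappa> * z - c))) = q * (1 + \<kappa> * z - c)" unfolding ec using b by (simp add: field_simps)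
      finally have "\<beta> * exp (\<kappa> * z) \<ge> q + q * (\<kappa> * z) - q * c" by (simp add: algebra_simps)
      then show ?thesis using Q2 unfolding c_def by (simp add: algebra_simps)
    qed
    show ?thesis unfolding EV'_EQ \<beta>_def[symmetric] q_def[symmetric] z_def[symmetric] rhs using key by simp
  qed
qed

lemma exp_cost_eq:
  "fluid_cost (exp_cost \<nu> \<kappa> \<alpha>) \<alpha> x0 u =
     (\<integral>\<^sup>+t\<in>{0..}. ennreal (fluid_state \<alpha> x0 u t + (\<lambda>w. \<nu> * max 0 (exp (\<kappa> * w) - exp (\<kappa> * \<alpha>))) (u t)) \<partial>lborel)"
  unfolding fluid_cost_def exp_cost_def by simp

lemma exp_lower:
  assumes nu: "\<nu> > 0" and ka: "\<kappa> > 0" and adm: "fluid_admissible \<alpha> x0 u"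
  shows "ennreal (EV \<kappa> (\<nu> * exp (\<kappa> * \<alpha>)) x0) \<le> fluid_cost (exp_cost \<nu> \<kappa> \<alpha>) \<alpha> x0 u"
proof -
  have b: "\<nu> * exp (\<kappa> * \<alpha>) > 0" using nu by simp
  have "ennreal (EV \<kappa> (\<nu> * exp (\<kappa> * \<alpha>)) x0 - EV \<kappa> (\<nu> * exp (\<kappa> * \<alpha>)) 0) \<le> fluid_cost (exp_cost \<nu> \<kappa> \<alpha>) \<alpha> x0 u"
    unfolding exp_cost_eq
  proof (rule verif[OF adm EV_cont[OF b] EV_deriv[OF b]])
    show "\<And>p w. 0 < p \<Longrightarrow> 0 \<le> w \<Longrightarrow> EV' \<kappa> (\<nu> * exp (\<kappa> * \<alpha>)) p * (w - \<alpha>) \<le> p + \<nu> * max 0 (exp (\<kappa> * w) - exp (\<kappa> * \<alpha>))"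
      using exp_hjb[OF nu ka] by blast
    show "(\<lambda>w. \<nu> * max 0 (exp (\<kappa> * w) - exp (\<kappa> * \<alpha>))) \<in> borel_measurable borel"
      by (rule borel_measurable_continuous_onI) (intro continuous_intros)
    show "\<And>w. 0 \<le> w \<Longrightarrow> 0 \<le> \<nu> * max 0 (exp (\<kappa> * w) - exp (\<kappa> * \<alpha>))" using nu by simp
  qed
  moreover have "EV \<kappa> (\<nu> * exp (\<kappa> * \<alpha>)) 0 = 0" using b unfolding EV_def by simp
  ultimately show ?thesis by simp
qed



lemma exp_upper:
  fixes \<alpha> \<nu> \<kappa> x0 :: real
  assumes al: "\<alpha> > 0" and nu: "\<nu> > 0" and ka: "\<kappa> > 0" and x0: "x0 > 0"
  shows "fluid_value (exp_cost \<nu> \<kappa> \<alpha>) \<alpha> x0 \<le> ennreal ((x0 + \<nu> * exp (\<kappa> * \<alpha>) * (exp 8 - 1)) * (\<kappa> * x0 / 4))"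
proof -
  define v where "v = 4 / \<kappa>"
  define T0 where "T0 = \<kappa> * x0 / 4"
  define C where "C = x0 + \<nu> * exp (\<kappa> * \<alpha>) * (exp 8 - 1)"
  have v: "v > 0" unfolding v_def using ka by simp
  have T0: "T0 > 0" unfolding T0_def using ka x0 by simp
  have xv: "x0 / T0 = v" unfolding T0_def v_def using ka x0 by (simp add: field_simps)
  have xv': "x0 = v * T0" using xv T0 by (simp add: field_simps)
  define X where "X = (\<lambda>t. x0 * (max 0 (1 - t / T0))^2)"
  define U where "U = (\<lambda>t. \<alpha> + 2 * v * max 0 (1 - t / T0))"
  have Xc: "continuous_on UNIV X" unfolding X_def by (intro continuous_intros) (use T0 in auto)
  have Uc: "continuous_on UNIV U" unfolding U_def by (intro continuous_intros) (use T0 in auto)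
  have Xd: "(X has_real_derivative (\<alpha> - U t)) (at t)" if t: "t > 0" "t \<notin> {T0}" for t
  proof (cases "t < T0")
    case True
    have ev: "eventually (\<lambda>s. X s = x0 * (1 - s / T0)^2) (nhds t)"
    proof (rule eventually_mono[OF eventually_nhds_in_open[OF open_lessThan, of t T0]])
      show "t \<in> {..<T0}" using True by simp
      fix s assume "s \<in> {..<T0}"
      then have "1 - s / T0 > 0" using T0 by (simp add: field_simps)
      then show "X s = x0 * (1 - s / T0)^2" unfolding X_def by simp
    qed
    have d: "((\<lambda>s. x0 * (1 - s / T0)^2) has_real_derivative x0 * (2 * (1 - t / T0) * (- 1 / T0))) (at t)"
      using T0 by (auto intro!: derivative_eq_intros simp: power2_eq_square field_simps)
    have "1 - t / T0 > 0" using True T0 by (simp add: field_simps)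
    then have val: "x0 * (2 * (1 - t / T0) * (- 1 / T0)) = \<alpha> - U t"
      unfolding U_def using T0 by (simp add: xv' field_simps)
    show ?thesis using d unfolding val by (subst DERIV_cong_ev[OF refl ev refl])
  next
    case False
    then have tT: "t > T0" using t by auto
    have ev: "eventually (\<lambda>s. X s = 0) (nhds t)"
    proof (rule eventually_mono[OF eventually_nhds_in_open[OF open_greaterThan, of t T0]])
      show "t \<in> {T0<..}" using tT by simp
      fix s assume "s \<in> {T0<..}"
      then have "1 - s / T0 < 0" using T0 by (simp add: field_simps)
      then show "X s = 0" unfolding X_def by simp
    qed
    have "1 - t / T0 < 0" using tT T0 by (simp add: field_simps)
    then have val: "\<alpha> - U t = 0" unfolding U_def by simp
    show ?thesis unfolding val by (subst DERIV_cong_ev[OF refl ev refl]) simp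
  qed
  have X0: "X 0 = x0" unfolding X_def by simp
  have Unn: "\<And>t. U t \<ge> 0" unfolding U_def using al v by simp
  have Xnn: "\<And>t. X t \<ge> 0" unfolding X_def using x0 by simp
  have E: "fluid_admissible \<alpha> x0 U" "\<And>t. t \<ge> 0 \<Longrightarrow> fluid_state \<alpha> x0 U t = X t"
    using explicit_adm[OF Xc Uc finite.insertI[OF finite.emptyI, of T0] Xd X0 Unn Xnn] by auto
  have Cnn: "C \<ge> 0" unfolding C_def using x0 nu by simp
  have pw: "ennreal (exp_cost \<nu> \<kappa> \<alpha> (fluid_state \<alpha> x0 U t) (U t)) * indicator {0..} t \<le> ennreal C * indicator {0..T0} t" for t
  proof (cases "t \<ge> 0")
    case False then show ?thesis by (simp add: indicator_def)
  next
    case True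
    show ?thesis
    proof (cases "t \<le> T0")
      case le: True
      define m where "m = 1 - t / T0"
      have m: "0 \<le> m" "m \<le> 1" unfolding m_def using le True T0 by (auto simp: field_simps)
      have Xle: "X t \<le> x0" unfolding X_def m_def[symmetric] using m x0
        by (simp add: mult_left_le power_le_one)
      have Ule: "U t \<le> \<alpha> + 2 * v" unfolding U_def m_def[symmetric] using m v by simp
      have "exp (\<kappa> * U t) \<le> exp (\<kappa> * (\<alpha> + 2 * v))" using Ule ka by simp
      also have "\<kappa> * (\<alpha> + 2 * v) = \<kappa> * \<alpha> + 8" unfolding v_def using ka by (simp add: field_simps)
      finally have "exp (\<kappa> * U t) \<le> exp (\<kappa> * \<alpha>) * exp 8" by (simp add: exp_add)
      then have "max 0 (exp (\<kappa> * U t) - exp (\<kappa> * \<alpha>)) \<le> exp (\<kappa> * \<alpha>) * (exp 8 - 1)"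
        by (intro max.boundedI) (simp_all add: algebra_simps)
      then have "\<nu> * max 0 (exp (\<kappa> * U t) - exp (\<kappa> * \<alpha>)) \<le> \<nu> * (exp (\<kappa> * \<alpha>) * (exp 8 - 1))"
        using nu by (intro mult_left_mono) auto
      then have "exp_cost \<nu> \<kappa> \<alpha> (fluid_state \<alpha> x0 U t) (U t) \<le> C"
        unfolding exp_cost_def E(2)[OF True] C_def using Xle by (simp add: mult.assoc)
      then show ?thesis using True le by (simp add: indicator_def ennreal_leI)
    next
      case gt: False
      have "1 - t / T0 < 0" using gt T0 by (simp add: field_simps)
      then have "X t = 0" "U t = \<alpha>" unfolding X_def U_def by auto
      then have "exp_cost \<nu> \<kappa> \<alpha> (fluid_state \<alpha> x0 U t) (U t) = 0"
        unfolding exp_cost_def E(2)[OF True] by simp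
      then show ?thesis by simp
    qed
  qed
  have "fluid_value (exp_cost \<nu> \<kappa> \<alpha>) \<alpha> x0 \<le> fluid_cost (exp_cost \<nu> \<kappa> \<alpha>) \<alpha> x0 U"
    unfolding fluid_value_def using E(1) by (intro INF_lower) auto
  also have "\<dots> \<le> (\<integral>\<^sup>+t. ennreal C * indicator {0..T0} t \<partial>lborel)"
    unfolding fluid_cost_def by (intro nn_integral_mono pw)
  also have "\<dots> = ennreal C * ennreal T0" using T0 by (simp add: nn_integral_cmult_indicator)
  also have "\<dots> = ennreal (C * T0)" using Cnn T0 by (simp add: ennreal_mult)
  finally show ?thesis unfolding C_def T0_def .
qed

lemma part2:
  fixes \<alpha> \<nu> \<kappa> :: real
  assumes al: "\<alpha> > 0" and nu: "\<nu> > 0" and ka: "\<kappa> > 0"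
  shows "\<exists>Cm Cp :: real. \<forall>x0. x0 \<ge> \<nu> * exp (\<kappa> * \<alpha>) * (exp 2 + 1) \<longrightarrow>
       (let xt = x0 - \<nu> * exp (\<kappa> * \<alpha>) in
         ereal (Cm + (\<kappa> / 2) * (xt^2 / (ln xt - ln \<nu> - (\<kappa> * \<alpha> + 1))))
           \<le> enn2ereal (fluid_value (exp_cost \<nu> \<kappa> \<alpha>) \<alpha> x0)
         \<and> enn2ereal (fluid_value (exp_cost \<nu> \<kappa> \<alpha>) \<alpha> x0) \<le> ereal (Cp + (\<kappa> / 2) * xt^2))"
proof -
  define \<beta> where "\<beta> = \<nu> * exp (\<kappa> * \<alpha>)"
  define c1 where "c1 = \<beta> * (exp 8 - 1)"
  define Cm where "Cm = - \<kappa> * (\<beta> * exp 2)^2 / 4"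
  define Cp where "Cp = \<kappa> / 16 * (4 * \<beta> + c1)^2"
  have b: "\<beta> > 0" unfolding \<beta>_def using nu by simp
  have lnb: "ln \<beta> = ln \<nu> + \<kappa> * \<alpha>" unfolding \<beta>_def using nu by (simp add: ln_mult)
  show ?thesis
  proof (intro exI allI impI)
    fix x0 :: real assume x0: "x0 \<ge> \<nu> * exp (\<kappa> * \<alpha>) * (exp 2 + 1)"
    define xt where "xt = x0 - \<beta>"
    have x0c: "x0 \<ge> \<beta> + \<beta> * exp 2" using x0 unfolding \<beta>_def by (simp add: algebra_simps)
    have xtp: "xt \<ge> \<beta> * exp 2" using x0c unfolding xt_def by simp
    have e2: "\<beta> * exp 2 > 0" using b by simp
    have x0p: "x0 > 0" using x0c b e2 by linarith
    have EVx: "EV \<kappa> \<beta> x0 = Cm + (\<kappa> / 2) * (xt^2 / (ln xt - ln \<nu> - (\<kappa> * \<alpha> + 1)))"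
    proof (cases "x0 \<le> \<beta> + \<beta> * exp 2")
      case True
      then have xe: "xt = \<beta> * exp 2" using x0c unfolding xt_def by simp
      have "ln xt - ln \<nu> - (\<kappa> * \<alpha> + 1) = 1" unfolding xe using b lnb by (simp add: ln_mult)
      moreover have "x0 > \<beta>" using x0c e2 by linarith
      then have "EV \<kappa> \<beta> x0 = \<kappa> * xt^2 / 4" using True unfolding EV_def EA_def xt_def by auto
      ultimately show ?thesis unfolding Cm_def xe by (simp add: field_simps)
    next
      case False
      moreover have "x0 > \<beta>" using x0c e2 by linarith
      ultimately have "EV \<kappa> \<beta> x0 = EB \<kappa> \<beta> x0" unfolding EV_def by auto
      then show ?thesis unfolding EB_def Cm_def xt_def using lnb by (simp add: algebra_simps)
    qed
    have low: "ennreal (EV \<kappa> \<beta> x0) \<le> fluid_value (exp_cost \<nu> \<kappa> \<alpha>) \<alpha> x0"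
      unfolding fluid_value_def \<beta>_def by (rule INF_greatest) (use exp_lower[OF nu ka] in auto)
    have "ereal (EV \<kappa> \<beta> x0) \<le> enn2ereal (ennreal (EV \<kappa> \<beta> x0))"
      by (cases "EV \<kappa> \<beta> x0 \<ge> 0") (auto simp: ennreal_neg intro: order_trans[OF _ enn2ereal_nonneg])
    also have "\<dots> \<le> enn2ereal (fluid_value (exp_cost \<nu> \<kappa> \<alpha>) \<alpha> x0)"
      using low by (simp add: less_eq_ennreal.rep_eq)
    finally have L: "ereal (Cm + (\<kappa> / 2) * (xt^2 / (ln xt - ln \<nu> - (\<kappa> * \<alpha> + 1)))) \<le> enn2ereal (fluid_value (exp_cost \<nu> \<kappa> \<alpha>) \<alpha> x0)"
      unfolding EVx .
    define B where "B = (x0 + c1) * (\<kappa> * x0 / 4)"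
    have up: "fluid_value (exp_cost \<nu> \<kappa> \<alpha>) \<alpha> x0 \<le> ennreal B"
      using exp_upper[OF al nu ka x0p] unfolding B_def c1_def \<beta>_def by (simp add: mult.assoc)
    have Bnn: "B \<ge> 0" unfolding B_def c1_def using x0p ka b by simp
    have alg: "Cp + (\<kappa> / 2) * xt^2 - B = \<kappa> / 4 * (x0 - (4 * \<beta> + c1) / 2)^2 + \<kappa> * \<beta>^2 / 2"
      unfolding Cp_def B_def xt_def by (simp add: power2_eq_square field_simps)
    have "0 \<le> \<kappa> / 4 * (x0 - (4 * \<beta> + c1) / 2)^2 + \<kappa> * \<beta>^2 / 2" using ka by simp
    then have BC: "B \<le> Cp + (\<kappa> / 2) * xt^2" using alg by linarith
    have "enn2ereal (fluid_value (exp_cost \<nu> \<kappa> \<alpha>) \<alpha> x0) \<le> enn2ereal (ennreal B)"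
      using up by (simp add: less_eq_ennreal.rep_eq)
    also have "\<dots> = ereal B" using Bnn by simp
    also have "\<dots> \<le> ereal (Cp + (\<kappa> / 2) * xt^2)" using BC by simp
    finally have U: "enn2ereal (fluid_value (exp_cost \<nu> \<kappa> \<alpha>) \<alpha> x0) \<le> ereal (Cp + (\<kappa> / 2) * xt^2)" .
    show "let xt = x0 - \<nu> * exp (\<kappa> * \<alpha>) in
         ereal (Cm + (\<kappa> / 2) * (xt^2 / (ln xt - ln \<nu> - (\<kappa> * \<alpha> + 1))))
           \<le> enn2ereal (fluid_value (exp_cost \<nu> \<kappa> \<alpha>) \<alpha> x0)
         \<and> enn2ereal (fluid_value (exp_cost \<nu> \<kappa> \<alpha>) \<alpha> x0) \<le> ereal (Cp + (\<kappa> / 2) * xt^2)"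
      unfolding Let_def \<beta>_def[symmetric] xt_def[symmetric] using L U by simp
  qed
qed


theorem proposition8:
  fixes \<alpha> \<nu> \<rho> \<kappa> :: real
  assumes "\<alpha> > 0" and "\<nu> > 0" and "\<rho> > 1" and "\<kappa> > 0"
  shows
   "(\<forall>x0\<ge>0.
       fluid_value (poly_cost \<nu> \<rho> \<alpha>) \<alpha> x0 =
         ennreal (\<nu> * x0 powr ((2*\<rho> - 1) / \<rho>) * (\<rho>^2 / (2*\<rho> - 1))
                  * (1 / (\<nu> * (\<rho> - 1))) powr ((\<rho> - 1) / \<rho>))
     \<and> (\<exists>u. fluid_admissible \<alpha> x0 u \<and>
            (\<forall>t\<ge>0. u t = (fluid_state \<alpha> x0 u t / (\<nu> * (\<rho> - 1))) powr (1/\<rho>) + \<alpha>))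
     \<and> (\<forall>u. fluid_admissible \<alpha> x0 u \<and>
            (\<forall>t\<ge>0. u t = (fluid_state \<alpha> x0 u t / (\<nu> * (\<rho> - 1))) powr (1/\<rho>) + \<alpha>)
            \<longrightarrow> fluid_cost (poly_cost \<nu> \<rho> \<alpha>) \<alpha> x0 u = fluid_value (poly_cost \<nu> \<rho> \<alpha>) \<alpha> x0))
    \<and>
    (\<exists>Cm Cp :: real. \<forall>x0. x0 \<ge> \<nu> * exp (\<kappa> * \<alpha>) * (exp 2 + 1) \<longrightarrow>
       (let xt = x0 - \<nu> * exp (\<kappa> * \<alpha>) in
         ereal (Cm + (\<kappa> / 2) * (xt^2 / (ln xt - ln \<nu> - (\<kappa> * \<alpha> + 1))))
           \<le> enn2ereal (fluid_value (exp_cost \<nu> \<kappa> \<alpha>) \<alpha> x0)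
         \<and> enn2ereal (fluid_value (exp_cost \<nu> \<kappa> \<alpha>) \<alpha> x0) \<le> ereal (Cp + (\<kappa> / 2) * xt^2)))"
  proof (rule conjI)
  show "\<forall>x0\<ge>0.
       fluid_value (poly_cost \<nu> \<rho> \<alpha>) \<alpha> x0 =
         ennreal (\<nu> * x0 powr ((2*\<rho> - 1) / \<rho>) * (\<rho>^2 / (2*\<rho> - 1))
                  * (1 / (\<nu> * (\<rho> - 1))) powr ((\<rho> - 1) / \<rho>))
     \<and> (\<exists>u. fluid_admissible \<alpha> x0 u \<and>
            (\<forall>t\<ge>0. u t = (fluid_state \<alpha> x0 u t / (\<nu> * (\<rho> - 1))) powr (1/\<rho>) + \<alpha>))
     \<and> (\<forall>u. fluid_admissible \<alpha> x0 u \<and>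
            (\<forall>t\<ge>0. u t = (fluid_state \<alpha> x0 u t / (\<nu> * (\<rho> - 1))) powr (1/\<rho>) + \<alpha>)
            \<longrightarrow> fluid_cost (poly_cost \<nu> \<rho> \<alpha>) \<alpha> x0 u = fluid_value (poly_cost \<nu> \<rho> \<alpha>) \<alpha> x0)"
    by (rule part1[OF assms(1,2,3)])
  show "\<exists>Cm Cp :: real. \<forall>x0. x0 \<ge> \<nu> * exp (\<kappa> * \<alpha>) * (exp 2 + 1) \<longrightarrow>
       (let xt = x0 - \<nu> * exp (\<kappa> * \<alpha>) in
         ereal (Cm + (\<kappa> / 2) * (xt^2 / (ln xt - ln \<nu> - (\<kappa> * \<alpha> + 1))))
           \<le> enn2ereal (fluid_value (exp_cost \<nu> \<kappa> \<alpha>) \<alpha> x0)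
         \<and> enn2ereal (fluid_value (exp_cost \<nu> \<kappa> \<alpha>) \<alpha> x0) \<le> ereal (Cp + (\<kappa> / 2) * xt^2))"
    by (rule part2[OF assms(1,2,4)])
qed

end
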